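(* Let $\lambda,\mu\in\Lambda$, $g\in\mathcal{D}_{\lambda\mu}$ and $A=(a_{ij})=\kappa(\lambda,g,\mu)$. Then \[\ell(g)=\frac12\sum_{(i,j)\in I^+}\Big(\sum_{x<i,\ y>j}+\sum_{x>i,\ y<j}\Big)a'_{ij}a_{xy}.\]
   Context: Fix integers $r\ge0$, $d\ge2$, $n=2r+2$, $D=2d+2$. $W$ is the group of bijections $g:\mathbb{Z}\to\mathbb{Z}$ with $g(i+D)=g(i)+D$, $g(-i)=-g(i)$, a Coxeter group with simple reflections $s_0,\dots,s_d$ where (elements determined by values on $1,\dots,d$) $s_0(1)=-1$, $s_0(k)=k$ ($k\ge2$); $s_d(d)=d+2$, $s_d(k)=k$ ($k<d$); $s_i$ ($1\le i\le d-1$) swaps $i,i+1$; $\ell$ is Coxeter length. $\Lambda$ is the set of $\lambda=(\lambda_0,\dots,\lambda_{r+1})\in\mathbb{N}^{r+2}$ with sum $d$; with $\lambda_{0,i}=\lambda_0+\dots+\lambda_i$, $W_\lambda$ is generated by $\{s_0,\dots,s_d\}\setminus\{s_{\lambda_{0,0}},\dots,s_{\lambda_{0,r}}\}$; $R_0^\lambda=[-\lambda_0..\lambda_0]$, $R_i^\lambda=(\lambda_{0,i-1}..\lambda_{0,i}]$ ($1\le i\le r$), $R^\lambda_{r+1}=[d+1-\lambda_{r+1}..d+1+\lambda_{r+1}]$, extended by $R^\lambda_{-i}=-R^\lambda_i$, $R^\lambda_{i+n}=R^\lambda_i+D$; $\mathcal{D}_\lambda=\{g\mid\ell(wg)=\ell(w)+\ell(g)\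 \forall w\in W_\lambda\}$, $\mathcal{D}_{\lambda\mu}=\mathcal{D}_\lambda\cap\mathcal{D}_\mu^{-1}$. $\kappa(\lambda,g,\mu)=(|R_i^\lambda\cap g(R_j^\mu)|)_{i,j\in\mathbb{Z}}$. $I^+=(\{0\}\times\mathbb{N})\sqcup([1..r]\times\mathbb{Z})\sqcup(\{r+1\}\times\mathbb{Z}_{\le r+1})$. $a'_{ij}=\frac12(a_{ii}-1)$ if $i=j\in(r+1)\mathbb{Z}$, and $a'_{ij}=a_{ij}$ otherwise. *)

theory Defs
  imports "HOL-Analysis.Analysis"
begin

definition Dp :: "nat \<Rightarrow> int" where "Dp d = 2 * int d + 2"
definition np :: "nat \<Rightarrow> int" where "np r = 2 * int r + 2"

definition Wgrp :: "nat \<Rightarrow> (int \<Rightarrow> int) set" where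
  "Wgrp d = {g. bij g \<and> (\<forall>i. g (i + Dp d) = g i + Dp d) \<and> (\<forall>i. g (- i) = - g i)}"

text \<open>Extension of the values f(1),...,f(d) to the element of W they determine.\<close>
definition extW :: "nat \<Rightarrow> (int \<Rightarrow> int) \<Rightarrow> int \<Rightarrow> int" where
  "extW d f x = (let D = Dp d; q = x div D; t = x mod D in
     if t = 0 then q * D
     else if t \<le> int d then q * D + f t
     else if t = int d + 1 then q * D + int d + 1
     else (q + 1) * D - f (D - t))"

definition sref :: "nat \<Rightarrow> nat \<Rightarrow> int \<Rightarrow> int" where
  "sref d k = extW d (\<lambda>t.
      if k = 0 then (if t = 1 then -1 else t)
      else if k = d then (if t = int d then int d + 2 else t)
      else (if t = int k then int k + 1 else if t = int k + 1 then int k else t))"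

definition wordprod :: "nat \<Rightarrow> nat list \<Rightarrow> int \<Rightarrow> int" where
  "wordprod d ws = foldr (\<lambda>k f. sref d k \<circ> f) ws id"

definition clen :: "nat \<Rightarrow> (int \<Rightarrow> int) \<Rightarrow> nat" where
  "clen d g = (LEAST m. \<exists>ws. set ws \<subseteq> {0..d} \<and> length ws = m \<and> wordprod d ws = g)"

definition Lam :: "nat \<Rightarrow> nat \<Rightarrow> (nat \<Rightarrow> nat) set" where
  "Lam r d = {lam. (\<Sum>i\<le>r+1. lam i) = d \<and> (\<forall>i>r+1. lam i = 0)}"

definition psum :: "(nat \<Rightarrow> nat) \<Rightarrow> nat \<Rightarrow> nat" where
  "psum lam i = (\<Sum>k\<le>i. lam k)"

definition Wpar :: "nat \<Rightarrow> nat \<Rightarrow> (nat \<Rightarrow> nat) \<Rightarrow> (int \<Rightarrow> int) set" where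
  "Wpar r d lam = {wordprod d ws | ws. set ws \<subseteq> {0..d} - {psum lam i | i. i \<le> r}}"

definition Dset :: "nat \<Rightarrow> nat \<Rightarrow> (nat \<Rightarrow> nat) \<Rightarrow> (int \<Rightarrow> int) set" where
  "Dset r d lam = {g \<in> Wgrp d. \<forall>w \<in> Wpar r d lam. clen d (w \<circ> g) = clen d w + clen d g}"

definition Dset2 :: "nat \<Rightarrow> nat \<Rightarrow> (nat \<Rightarrow> nat) \<Rightarrow> (nat \<Rightarrow> nat) \<Rightarrow> (int \<Rightarrow> int) set" where
  "Dset2 r d lam mu = Dset r d lam \<inter> inv ` Dset r d mu"

definition Rbase :: "nat \<Rightarrow> nat \<Rightarrow> (nat \<Rightarrow> nat) \<Rightarrow> nat \<Rightarrow> int set" where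
  "Rbase r d lam j =
     (if j = 0 then {- int (lam 0) .. int (lam 0)}
      else if j \<le> r then {int (psum lam (j - 1)) + 1 .. int (psum lam j)}
      else {int d + 1 - int (lam (r + 1)) .. int d + 1 + int (lam (r + 1))})"

definition Rset :: "nat \<Rightarrow> nat \<Rightarrow> (nat \<Rightarrow> nat) \<Rightarrow> int \<Rightarrow> int set" where
  "Rset r d lam i = (let n = np r; D = Dp d; q = i div n; j = i mod n in
     if j \<le> int r + 1 then (\<lambda>x. x + q * D) ` Rbase r d lam (nat j)
     else (\<lambda>x. (q + 1) * D - x) ` Rbase r d lam (nat (n - j)))"

definition kap :: "nat \<Rightarrow> nat \<Rightarrow> (nat \<Rightarrow> nat) \<Rightarrow> (int \<Rightarrow> int) \<Rightarrow> (nat \<Rightarrow> nat) \<Rightarrow> int \<Rightarrow> int \<Rightarrow> nat" where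
  "kap r d lam g mu i j = card (Rset r d lam i \<inter> g ` Rset r d mu j)"

definition Iplus :: "nat \<Rightarrow> (int \<times> int) set" where
  "Iplus r = {(i, j). (i = 0 \<and> j \<ge> 0) \<or> (1 \<le> i \<and> i \<le> int r) \<or> (i = int r + 1 \<and> j \<le> int r + 1)}"

definition aprime :: "nat \<Rightarrow> (int \<Rightarrow> int \<Rightarrow> nat) \<Rightarrow> int \<Rightarrow> int \<Rightarrow> real" where
  "aprime r a i j = (if i = j \<and> (int r + 1) dvd i then (real (a i j) - 1) / 2 else real (a i j))"

end

theory Submission
  imports Defs
begin


lemma Dp_pos: "Dp d > 0" by (simp add: Dp_def)

lemma divmod_cases:
  fixes x D :: int assumes "0 < D"
  shows "x = x div D * D + x mod D \<and> 0 \<le> x mod D \<and> x mod D < D \<and>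
         (x div D * D = 0 \<or> x div D * D \<ge> D \<or> x div D * D \<le> -D)"
proof -
  have "x div D = 0 \<or> x div D \<ge> 1 \<or> x div D \<le> -1" by linarith
  moreover have "x div D \<ge> 1 \<Longrightarrow> x div D * D \<ge> D" using assms
    using mult_right_mono[of 1 "x div D" D] by simp
  moreover have "x div D \<le> -1 \<Longrightarrow> x div D * D \<le> -D" using assms
    using mult_right_mono[of "x div D" "-1" D] by simp
  ultimately show ?thesis using assms by auto
qed

context fixes d :: nat begin

lemma W_D: "g \<in> Wgrp d \<Longrightarrow> g (i + Dp d) = g i + Dp d" by (simp add: Wgrp_def)
lemma W_neg: "g \<in> Wgrp d \<Longrightarrow> g (- i) = - g i" by (simp add: Wgrp_def)
lemma W_bij: "g \<in> Wgrp d \<Longrightarrow> bij g" by (simp add: Wgrp_def)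
lemma W_inj: "g \<in> Wgrp d \<Longrightarrow> g x = g y \<longleftrightarrow> x = y"
  using W_bij[of g] bij_is_inj[of g] inj_eq[of g x y] by blast
lemma W_0: "g \<in> Wgrp d \<Longrightarrow> g 0 = 0"
  using W_neg[of g 0] by simp
lemma W_mD: "g \<in> Wgrp d \<Longrightarrow> g (i - Dp d) = g i - Dp d"
  using W_D[of g "i - Dp d"] by simp

lemma W_shift_nat: "g \<in> Wgrp d \<Longrightarrow> g (i + int m * Dp d) = g i + int m * Dp d"
proof (induction m arbitrary: i)
  case 0 then show ?case by simp
next
  case (Suc m)
  have "g (i + int (Suc m) * Dp d) = g ((i + int m * Dp d) + Dp d)" by (simp add: algebra_simps)
  also have "\<dots> = g (i + int m * Dp d) + Dp d" using Suc W_D[of g] by blast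
  also have "\<dots> = g i + int (Suc m) * Dp d" using Suc by (simp add: algebra_simps)
  finally show ?case .
qed

lemma W_shift: assumes g: "g \<in> Wgrp d" shows "g (i + m * Dp d) = g i + m * Dp d"
proof (cases "m \<ge> 0")
  case True then show ?thesis using W_shift_nat[OF g, of i "nat m"] by simp
next
  case False
  define k where "k = nat (-m)"
  have m: "m = - int k" using False k_def by simp
  have "g i = g ((i + m * Dp d) + int k * Dp d)" by (simp add: m)
  also have "\<dots> = g (i + m * Dp d) + int k * Dp d" using W_shift_nat[OF g] by simp
  finally show ?thesis by (simp add: m)
qed

lemma W_refl: "g \<in> Wgrp d \<Longrightarrow> g (m * Dp d - i) = m * Dp d - g i"
  using W_shift[of g "-i" m] W_neg[of g i] by simp

lemma W_fix: "g \<in> Wgrp d \<Longrightarrow> g (int d + 1) = int d + 1"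
proof -
  assume g: "g \<in> Wgrp d"
  have "g (- (int d + 1)) = g (int d + 1) - Dp d"
    using W_mD[OF g, of "int d + 1"] by (simp add: Dp_def algebra_simps)
  moreover have "g (- (int d + 1)) = - g (int d + 1)" using W_neg[OF g] by blast
  ultimately have "- g (int d + 1) = g (int d + 1) - Dp d" by simp
  then show ?thesis by (simp add: Dp_def)
qed

lemma W_comp: "g \<in> Wgrp d \<Longrightarrow> h \<in> Wgrp d \<Longrightarrow> g \<circ> h \<in> Wgrp d"
  unfolding Wgrp_def by (auto intro: bij_comp)

lemma W_inv: "g \<in> Wgrp d \<Longrightarrow> inv g \<in> Wgrp d"
proof -
  assume g: "g \<in> Wgrp d"
  have b: "bij g" using g by (simp add: Wgrp_def)
  have 1: "inv g (i + Dp d) = inv g i + Dp d" for i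
  proof -
    have "g (inv g i + Dp d) = i + Dp d" using W_D[OF g] b by (simp add: bij_inv_eq_iff[of g] bij_is_surj surj_f_inv_f)
    then show ?thesis using b bij_inv_eq_iff[of g] by metis
  qed
  have 2: "inv g (- i) = - inv g i" for i
  proof -
    have "g (- inv g i) = - i" using W_neg[OF g] b by (simp add: bij_is_surj surj_f_inv_f)
    then show ?thesis using b bij_inv_eq_iff[of g] by metis
  qed
  show ?thesis using 1 2 b bij_imp_bij_inv unfolding Wgrp_def by blast
qed

lemma W_inv_app: "g \<in> Wgrp d \<Longrightarrow> g (inv g x) = x"
  using W_bij[of g] bij_is_surj surj_f_inv_f by metis
lemma W_app_inv: "g \<in> Wgrp d \<Longrightarrow> inv g (g x) = x"
  using W_bij[of g] bij_is_inj inv_f_f by metis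

lemma W_id: "id \<in> Wgrp d" by (simp add: Wgrp_def)

lemma W_ext: "g \<in> Wgrp d \<Longrightarrow> g x = extW d g x"
proof -
  assume g: "g \<in> Wgrp d"
  define D where "D = Dp d"
  define q where "q = x div D"
  define t where "t = x mod D"
  have x: "x = t + q * D" and t0: "0 \<le> t" and tD: "t < D"
    using divmod_cases[of D x] Dp_pos[of d] by (auto simp: D_def q_def t_def)
  have gx: "g x = g t + q * D" using W_shift[OF g] by (simp add: x D_def)
  show ?thesis
  proof -
    have e: "extW d g x = (if t = 0 then q * D
     else if t \<le> int d then q * D + g t
     else if t = int d + 1 then q * D + int d + 1
     else (q + 1) * D - g (D - t))" unfolding extW_def Let_def D_def q_def t_def by simp
    consider "t = 0" | "t \<noteq> 0 \<and> t \<le> int d" | "t = int d + 1" | "t > int d + 1" by linarith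
    then show ?thesis
    proof cases
      case 1 then show ?thesis using e gx W_0[OF g] by simp
    next
      case 2 then show ?thesis using e gx by simp
    next
      case 3 then show ?thesis using e gx W_fix[OF g] by simp
    next
      case 4
      have "g t = g (1 * D - (D - t))" by simp
      also have "\<dots> = D - g (D - t)" using W_refl[OF g, of 1 "D - t"] by (simp add: D_def)
      finally show ?thesis using e gx 4 by (simp add: algebra_simps)
    qed
  qed
qed

end


lemma mod_shift_eq:
  fixes x D c :: int
  assumes "x mod D = t" "0 \<le> t + c" "t + c < D"
  shows "(x + c) mod D = t + c"
proof -
  have "(x + c) mod D = (x mod D + c) mod D" by (simp add: mod_add_left_eq)
  then show ?thesis using assms by simp
qed

context fixes d :: nat begin

lemma sref_mid:
  assumes "1 \<le> k" "k < d"
  shows "sref d k x = (let t = x mod Dp d in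
     if t = int k \<or> t = Dp d - int k - 1 then x + 1
     else if t = int k + 1 \<or> t = Dp d - int k then x - 1 else x)"
proof -
  define D where "D = Dp d"
  define q where "q = x div D"
  define t where "t = x mod D"
  have x: "x = t + q * D" and t0: "0 \<le> t" and tD: "t < D"
    using divmod_cases[of D x] Dp_pos[of d] by (auto simp: D_def q_def t_def)
  have D: "D = 2 * int d + 2" by (simp add: D_def Dp_def)
  have e: "sref d k x = (if t = 0 then q * D
     else if t \<le> int d then q * D + (if t = int k then int k + 1 else if t = int k + 1 then int k else t)
     else if t = int d + 1 then q * D + int d + 1
     else (q + 1) * D - (if D - t = int k then int k + 1 else if D - t = int k + 1 then int k else D - t))"
    unfolding sref_def extW_def Let_def D_def[symmetric] q_def[symmetric] t_def[symmetric]
    using assms by auto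
  show ?thesis unfolding Let_def D_def[symmetric] t_def[symmetric] e
    using assms t0 tD D by (auto simp: x algebra_simps)
qed

lemma sref_0:
  assumes "2 \<le> d"
  shows "sref d 0 x = (let t = x mod Dp d in
     if t = 1 then x - 2 else if t = Dp d - 1 then x + 2 else x)"
proof -
  define D where "D = Dp d"
  define q where "q = x div D"
  define t where "t = x mod D"
  have x: "x = t + q * D" and t0: "0 \<le> t" and tD: "t < D"
    using divmod_cases[of D x] Dp_pos[of d] by (auto simp: D_def q_def t_def)
  have D: "D = 2 * int d + 2" by (simp add: D_def Dp_def)
  have e: "sref d 0 x = (if t = 0 then q * D
     else if t \<le> int d then q * D + (if t = 1 then -1 else t)
     else if t = int d + 1 then q * D + int d + 1
     else (q + 1) * D - (if D - t = 1 then -1 else D - t))"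
    unfolding sref_def extW_def Let_def D_def[symmetric] q_def[symmetric] t_def[symmetric]
    using assms by auto
  show ?thesis unfolding Let_def D_def[symmetric] t_def[symmetric] e
    using assms t0 tD D by (auto simp: x algebra_simps)
qed

lemma sref_d:
  assumes "2 \<le> d"
  shows "sref d d x = (let t = x mod Dp d in
     if t = int d then x + 2 else if t = int d + 2 then x - 2 else x)"
proof -
  define D where "D = Dp d"
  define q where "q = x div D"
  define t where "t = x mod D"
  have x: "x = t + q * D" and t0: "0 \<le> t" and tD: "t < D"
    using divmod_cases[of D x] Dp_pos[of d] by (auto simp: D_def q_def t_def)
  have D: "D = 2 * int d + 2" by (simp add: D_def Dp_def)
  have e: "sref d d x = (if t = 0 then q * D
     else if t \<le> int d then q * D + (if t = int d then int d + 2 else t)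
     else if t = int d + 1 then q * D + int d + 1
     else (q + 1) * D - (if D - t = int d then int d + 2 else D - t))"
    unfolding sref_def extW_def Let_def D_def[symmetric] q_def[symmetric] t_def[symmetric]
    using assms by auto
  show ?thesis unfolding Let_def D_def[symmetric] t_def[symmetric] e
    using assms t0 tD D by (auto simp: x algebra_simps)
qed

lemma mod_plus_case:
  fixes x c :: int
  assumes "0 \<le> c" "c < Dp d"
  shows "(x + c) mod Dp d = (if x mod Dp d + c < Dp d then x mod Dp d + c else x mod Dp d + c - Dp d)"
proof -
  have e: "(x + c) mod Dp d = (x mod Dp d + c) mod Dp d" by (simp add: mod_add_left_eq)
  have m0: "0 \<le> x mod Dp d" "x mod Dp d < Dp d" using Dp_pos[of d] by auto
  show ?thesis
  proof (cases "x mod Dp d + c < Dp d")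
    case True then show ?thesis using e m0 assms by simp
  next
    case False
    have "(x mod Dp d + c) mod Dp d = (x mod Dp d + c - Dp d) mod Dp d"
      using minus_mod_self2[of "x mod Dp d + c" "Dp d"] by simp
    also have "\<dots> = x mod Dp d + c - Dp d" by (rule mod_pos_pos_trivial; use m0 assms False in linarith)
    finally show ?thesis using e False by simp
  qed
qed

lemma mod_minus_case:
  fixes x c :: int
  assumes "0 \<le> c" "c < Dp d"
  shows "(x - c) mod Dp d = (if c \<le> x mod Dp d then x mod Dp d - c else x mod Dp d - c + Dp d)"
proof -
  have e: "(x - c) mod Dp d = (x mod Dp d - c) mod Dp d" by (simp add: mod_diff_left_eq)
  have m0: "0 \<le> x mod Dp d" "x mod Dp d < Dp d" using Dp_pos[of d] by auto
  show ?thesis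
  proof (cases "c \<le> x mod Dp d")
    case True then show ?thesis using e m0 assms by simp
  next
    case False
    have "(x mod Dp d - c) mod Dp d = (x mod Dp d - c + Dp d) mod Dp d"
      using mod_add_self2[of "x mod Dp d - c" "Dp d"] by simp
    also have "\<dots> = x mod Dp d - c + Dp d" by (rule mod_pos_pos_trivial; use m0 assms False in linarith)
    finally show ?thesis using e False by simp
  qed
qed

lemma mod_facts:
  fixes x :: int assumes "2 \<le> d"
  shows "(x + 1) mod Dp d = (if x mod Dp d + 1 < Dp d then x mod Dp d + 1 else x mod Dp d + 1 - Dp d)"
    and "(x + 2) mod Dp d = (if x mod Dp d + 2 < Dp d then x mod Dp d + 2 else x mod Dp d + 2 - Dp d)"
    and "(x - 1) mod Dp d = (if 1 \<le> x mod Dp d then x mod Dp d - 1 else x mod Dp d - 1 + Dp d)"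
    and "(x - 2) mod Dp d = (if 2 \<le> x mod Dp d then x mod Dp d - 2 else x mod Dp d - 2 + Dp d)"
  using mod_plus_case[of 1 x] mod_plus_case[of 2 x] mod_minus_case[of 1 x] mod_minus_case[of 2 x]
    assms by (auto simp: Dp_def)

lemma sref_invol:
  assumes d: "2 \<le> d" and k: "k \<le> d"
  shows "sref d k (sref d k x) = x"
proof -
  have D: "2 * int d + 2 = Dp d" by (simp add: Dp_def)
  have m0: "0 \<le> x mod Dp d" "x mod Dp d < Dp d" using Dp_pos[of d] by auto
  have c0: "sref d 0 (sref d 0 x) = x"
  proof -
    consider "x mod Dp d = 1" | "x mod Dp d = Dp d - 1" | "x mod Dp d \<noteq> 1 \<and> x mod Dp d \<noteq> Dp d - 1" by blast
    then show ?thesis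
    proof cases
      case 1 then show ?thesis using D d by (simp add: sref_0[OF d] Let_def mod_facts[OF d])
    next
      case 2 then show ?thesis using D d by (simp add: sref_0[OF d] Let_def mod_facts[OF d])
    next
      case 3 then show ?thesis using D d by (simp add: sref_0[OF d] Let_def mod_facts[OF d])
    qed
  qed
  have cd: "sref d d (sref d d x) = x"
  proof -
    consider "x mod Dp d = int d" | "x mod Dp d = int d + 2" | "x mod Dp d \<noteq> int d \<and> x mod Dp d \<noteq> int d + 2" by blast
    then show ?thesis
    proof cases
      case 1 then show ?thesis using D d by (simp add: sref_d[OF d] Let_def mod_facts[OF d])
    next
      case 2 then show ?thesis using D d by (simp add: sref_d[OF d] Let_def mod_facts[OF d])
    next
      case 3 then show ?thesis using D d by (simp add: sref_d[OF d] Let_def mod_facts[OF d])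
    qed
  qed
  consider "k = 0" | "k = d" | "1 \<le> k \<and> k < d" using k by linarith
  then show ?thesis
  proof cases
    case 1 then show ?thesis using c0 by simp
  next
    case 2 then show ?thesis using cd by simp
  next
    case 3
    then have k1: "1 \<le> k" "k < d" by auto
    consider "x mod Dp d = int k" | "x mod Dp d = int k + 1" | "x mod Dp d = Dp d - int k - 1"
      | "x mod Dp d = Dp d - int k"
      | "x mod Dp d \<noteq> int k \<and> x mod Dp d \<noteq> int k + 1 \<and> x mod Dp d \<noteq> Dp d - int k - 1 \<and> x mod Dp d \<noteq> Dp d - int k"
      by blast
    then show ?thesis
    proof cases
      case 1 then show ?thesis using D k1 by (simp add: sref_mid[OF k1] Let_def mod_facts[OF d])
    next
      case 2 then show ?thesis using D k1 by (simp add: sref_mid[OF k1] Let_def mod_facts[OF d])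
    next
      case 3 then show ?thesis using D k1 by (simp add: sref_mid[OF k1] Let_def mod_facts[OF d])
    next
      case 4 then show ?thesis using D k1 by (simp add: sref_mid[OF k1] Let_def mod_facts[OF d])
    next
      case 5 then show ?thesis using D k1 by (simp add: sref_mid[OF k1] Let_def mod_facts[OF d])
    qed
  qed
qed

lemma sref_bij: "2 \<le> d \<Longrightarrow> k \<le> d \<Longrightarrow> bij (sref d k)"
  by (rule involuntory_imp_bij) (rule sref_invol)

lemma sref_shift:
  assumes d: "2 \<le> d" and k: "k \<le> d"
  shows "sref d k (x + Dp d) = sref d k x + Dp d"
proof -
  have m: "(x + Dp d) mod Dp d = x mod Dp d" by simp
  consider "k = 0" | "k = d" | "1 \<le> k \<and> k < d" using k by linarith
  then show ?thesis
  proof cases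
    case 1 then show ?thesis by (simp add: sref_0[OF d] Let_def m)
  next
    case 2 then show ?thesis by (simp add: sref_d[OF d] Let_def m)
  next
    case 3
    then have k1: "1 \<le> k" "k < d" by auto
    show ?thesis unfolding sref_mid[OF k1] Let_def m by auto
  qed
qed

lemma sref_neg:
  assumes d: "2 \<le> d" and k: "k \<le> d"
  shows "sref d k (- x) = - sref d k x"
proof -
  define t where "t = x mod Dp d"
  have t0: "0 \<le> t" and tD: "t < Dp d" using Dp_pos[of d] by (auto simp: t_def)
  have D: "Dp d = 2 * int d + 2" by (simp add: Dp_def)
  have m: "(- x) mod Dp d = (if t = 0 then 0 else Dp d - t)"
    unfolding t_def by (simp add: zmod_zminus1_eq_if)
  consider "k = 0" | "k = d" | "1 \<le> k \<and> k < d" using k by linarith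
  then show ?thesis
  proof cases
    case 1 then show ?thesis using t0 tD D[symmetric] d by (simp add: sref_0[OF d] Let_def m t_def[symmetric])
  next
    case 2 then show ?thesis using t0 tD D[symmetric] d by (simp add: sref_d[OF d] Let_def m t_def[symmetric])
  next
    case 3
    then have k1: "1 \<le> k" "k < d" by auto
    show ?thesis using t0 tD D[symmetric] d k1 unfolding sref_mid[OF k1] Let_def m t_def[symmetric] by auto
  qed
qed

lemma sref_W: "2 \<le> d \<Longrightarrow> k \<le> d \<Longrightarrow> sref d k \<in> Wgrp d"
  unfolding Wgrp_def using sref_bij sref_shift sref_neg by blast

lemma wordprod_Nil: "wordprod d [] = id" by (simp add: wordprod_def)
lemma wordprod_Cons: "wordprod d (k # ws) = sref d k \<circ> wordprod d ws"
  by (simp add: wordprod_def)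
lemma wordprod_snoc: "wordprod d (ws @ [k]) = wordprod d ws \<circ> sref d k"
  by (induction ws) (auto simp: wordprod_def)

lemma wordprod_W: "2 \<le> d \<Longrightarrow> set ws \<subseteq> {0..d} \<Longrightarrow> wordprod d ws \<in> Wgrp d"
  by (induction ws) (auto simp: wordprod_Nil wordprod_Cons W_id intro!: W_comp sref_W)

end


definition cnt :: "(int \<Rightarrow> int) \<Rightarrow> int \<Rightarrow> nat" where
  "cnt h p = card {q. (p - q) * (h p - h q) < 0}"

definition Ssum :: "nat \<Rightarrow> (int \<Rightarrow> int) \<Rightarrow> nat" where
  "Ssum d h = (\<Sum>p\<in>{1..int d}. cnt h p)"

definition sgn_same :: "int \<Rightarrow> int \<Rightarrow> bool" where
  "sgn_same a b \<longleftrightarrow> (a < 0 \<longleftrightarrow> b < 0) \<and> (0 < a \<longleftrightarrow> 0 < b)"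

lemma sgn_same_mult: "sgn_same a b \<Longrightarrow> (a * X < 0 \<longleftrightarrow> b * X < 0)"
  unfolding sgn_same_def by (auto simp: mult_less_0_iff)

lemma card_toggle:
  assumes "finite {v. Q v}" "finite T" "\<And>v. v \<notin> T \<Longrightarrow> P v = Q v"
  shows "card {v. P v} + card {v\<in>T. Q v} = card {v. Q v} + card {v\<in>T. P v}"
proof -
  have eP: "{v. P v} = {v. Q v \<and> v \<notin> T} \<union> {v\<in>T. P v}" using assms(3) by auto
  have eQ: "{v. Q v} = {v. Q v \<and> v \<notin> T} \<union> {v\<in>T. Q v}" by auto
  have f1: "finite {v. Q v \<and> v \<notin> T}" using assms(1) by (rule finite_subset[rotated]) auto
  have f2: "finite {v\<in>T. P v}" "finite {v\<in>T. Q v}" using assms(2) by auto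
  have "card {v. P v} = card {v. Q v \<and> v \<notin> T} + card {v\<in>T. P v}"
    unfolding eP by (rule card_Un_disjoint) (use f1 f2 in auto)
  moreover have "card {v. Q v} = card {v. Q v \<and> v \<notin> T} + card {v\<in>T. Q v}"
    by (subst eQ, rule card_Un_disjoint) (use f1 f2 in \<open>auto+\<close>)
  ultimately show ?thesis by simp
qed

lemma card_reindex_invol:
  assumes "\<And>x. s (s x) = x"
  shows "card {q. A (s q)} = card {v. A v}"
proof -
  have "{q. A (s q)} = s ` {v. A v}" using assms by (auto intro: image_eqI[where x="s _"])
  moreover have "inj s" using assms by (metis injI)
  ultimately show ?thesis by (simp add: card_image inj_on_subset[of s UNIV])
qed

context fixes d :: nat begin

lemma W_disp: assumes g: "g \<in> Wgrp d" shows "\<exists>C. \<forall>x. \<bar>g x - x\<bar> \<le> C"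
proof -
  define C where "C = Max ((\<lambda>t. \<bar>g t - t\<bar>) ` {0..<Dp d})"
  have "\<bar>g x - x\<bar> \<le> C" for x
  proof -
    define t where "t = x mod Dp d"
    have x: "x = t + x div Dp d * Dp d" using divmod_cases[of "Dp d" x] Dp_pos[of d] by (auto simp: t_def)
    have t: "t \<in> {0..<Dp d}" using Dp_pos[of d] by (auto simp: t_def)
    have "g x - x = g t - t" using W_shift[OF g, of t "x div Dp d"] x by (metis add_diff_cancel_right)
    moreover have "\<bar>g t - t\<bar> \<le> C" unfolding C_def using t by (intro Max_ge) auto
    ultimately show ?thesis by simp
  qed
  then show ?thesis by blast
qed

lemma cnt_fin: assumes g: "g \<in> Wgrp d" shows "finite {q. (p - q) * (g p - g q) < 0}"
proof -
  obtain C where C: "\<And>x. \<bar>g x - x\<bar> \<le> C" using W_disp[OF g] by blast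
  have "{q. (p - q) * (g p - g q) < 0} \<subseteq> {p - 2 * C .. p + 2 * C}"
  proof
    fix q assume q: "q \<in> {q. (p - q) * (g p - g q) < 0}"
    have Cp: "\<bar>g p - p\<bar> \<le> C" and Cq: "\<bar>g q - q\<bar> \<le> C" using C by auto
    show "q \<in> {p - 2 * C .. p + 2 * C}"
    proof (rule ccontr)
      assume "q \<notin> {p - 2 * C .. p + 2 * C}"
      then have "q < p - 2 * C \<or> q > p + 2 * C" by auto
      then have "(p - q > 0 \<and> g p - g q > 0) \<or> (p - q < 0 \<and> g p - g q < 0)" using Cp Cq by auto
      then have "(p - q) * (g p - g q) > 0" by (auto simp: zero_less_mult_iff)
      then show False using q by simp
    qed
  qed
  then show ?thesis by (rule finite_subset) simp
qed

lemma cnt_neg: assumes g: "g \<in> Wgrp d" shows "cnt g (- p) = cnt g p"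
proof -
  have "{q. (- p - q) * (g (- p) - g q) < 0} = uminus ` {q. (p - q) * (g p - g q) < 0}"
  proof -
    have "(- p - q) * (g (- p) - g q) = (p - (-q)) * (g p - g (-q))" for q
      using W_neg[OF g, of p] W_neg[OF g, of q] by (simp add: algebra_simps)
    then show ?thesis by (auto intro: image_eqI[where x="- _"])
  qed
  then show ?thesis unfolding cnt_def by (simp add: card_image)
qed

lemma cnt_shift: assumes g: "g \<in> Wgrp d" shows "cnt g (p + m * Dp d) = cnt g p"
proof -
  have "{q. (p + m * Dp d - q) * (g (p + m * Dp d) - g q) < 0} = (\<lambda>q. q + m * Dp d) ` {q. (p - q) * (g p - g q) < 0}"
  proof -
    have "(p + m * Dp d - q) * (g (p + m * Dp d) - g q) = (p - (q - m * Dp d)) * (g p - g (q - m * Dp d))" for q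
      using W_shift[OF g, of p m] W_shift[OF g, of "q - m * Dp d" m] by (simp add: algebra_simps)
    then show ?thesis by (auto intro: image_eqI[where x="_ - m * Dp d"])
  qed
  moreover have "inj (\<lambda>q::int. q + m * Dp d)" by (simp add: inj_on_def)
  ultimately show ?thesis unfolding cnt_def by (simp add: card_image)
qed

lemma cnt_refl: assumes g: "g \<in> Wgrp d" shows "cnt g (Dp d - p) = cnt g p"
  using cnt_shift[OF g, of "-p" 1] cnt_neg[OF g, of p] by simp

lemma v_decomp:
  obtains t X where "v = X + t" "0 \<le> t" "t < Dp d" "X = 0 \<or> X \<ge> Dp d \<or> X \<le> - Dp d" "v mod Dp d = t"
  using divmod_cases[of "Dp d" v] Dp_pos[of d] by blast

lemma sign_mid:
  assumes d: "2 \<le> d" and k: "1 \<le> k" "k < d"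
  shows "p \<in> {1..int d} \<Longrightarrow> p \<noteq> int k \<Longrightarrow> p \<noteq> int k + 1 \<Longrightarrow> sgn_same (p - sref d k v) (p - v)"
    and "v \<noteq> int k \<Longrightarrow> sgn_same (int k - sref d k v) (int k + 1 - v)"
    and "v \<noteq> int k + 1 \<Longrightarrow> sgn_same (int k + 1 - sref d k v) (int k - v)"
proof -
  obtain t X where v: "v = X + t" "0 \<le> t" "t < Dp d" "X = 0 \<or> X \<ge> Dp d \<or> X \<le> - Dp d"
     and vm: "v mod Dp d = t" by (rule v_decomp)
  have D: "Dp d = 2 * int d + 2" by (simp add: Dp_def)
  have s: "sref d k v = (if t = int k \<or> t = Dp d - int k - 1 then v + 1
     else if t = int k + 1 \<or> t = Dp d - int k then v - 1 else v)"
    using sref_mid[OF k, of v] vm by (simp add: Let_def)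
  show "p \<in> {1..int d} \<Longrightarrow> p \<noteq> int k \<Longrightarrow> p \<noteq> int k + 1 \<Longrightarrow> sgn_same (p - sref d k v) (p - v)"
    unfolding s sgn_same_def using v D k by auto
  show "v \<noteq> int k \<Longrightarrow> sgn_same (int k - sref d k v) (int k + 1 - v)"
    unfolding s sgn_same_def using v D k by auto
  show "v \<noteq> int k + 1 \<Longrightarrow> sgn_same (int k + 1 - sref d k v) (int k - v)"
    unfolding s sgn_same_def using v D k by auto
qed

lemma sign_0:
  assumes d: "2 \<le> d"
  shows "p \<in> {2..int d} \<Longrightarrow> sgn_same (p - sref d 0 v) (p - v)"
    and "v \<noteq> 0 \<Longrightarrow> v \<noteq> 1 \<Longrightarrow> sgn_same (1 - sref d 0 v) (- 1 - v)"
proof -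
  obtain t X where v: "v = X + t" "0 \<le> t" "t < Dp d" "X = 0 \<or> X \<ge> Dp d \<or> X \<le> - Dp d"
     and vm: "v mod Dp d = t" by (rule v_decomp)
  have D: "Dp d = 2 * int d + 2" by (simp add: Dp_def)
  have s: "sref d 0 v = (if t = 1 then v - 2 else if t = Dp d - 1 then v + 2 else v)"
    using sref_0[OF d, of v] vm by (simp add: Let_def)
  show "p \<in> {2..int d} \<Longrightarrow> sgn_same (p - sref d 0 v) (p - v)"
    unfolding s sgn_same_def using v D d by auto
  show "v \<noteq> 0 \<Longrightarrow> v \<noteq> 1 \<Longrightarrow> sgn_same (1 - sref d 0 v) (- 1 - v)"
    unfolding s sgn_same_def using v D d by auto
qed

lemma sign_d:
  assumes d: "2 \<le> d"
  shows "p \<in> {1..int d - 1} \<Longrightarrow> sgn_same (p - sref d d v) (p - v)"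
    and "v \<noteq> int d \<Longrightarrow> v \<noteq> int d + 1 \<Longrightarrow> sgn_same (int d - sref d d v) (int d + 2 - v)"
proof -
  obtain t X where v: "v = X + t" "0 \<le> t" "t < Dp d" "X = 0 \<or> X \<ge> Dp d \<or> X \<le> - Dp d"
     and vm: "v mod Dp d = t" by (rule v_decomp)
  have D: "Dp d = 2 * int d + 2" by (simp add: Dp_def)
  have s: "sref d d v = (if t = int d then v + 2 else if t = int d + 2 then v - 2 else v)"
    using sref_d[OF d, of v] vm by (simp add: Let_def)
  show "p \<in> {1..int d - 1} \<Longrightarrow> sgn_same (p - sref d d v) (p - v)"
    unfolding s sgn_same_def using v D d by auto
  show "v \<noteq> int d \<Longrightarrow> v \<noteq> int d + 1 \<Longrightarrow> sgn_same (int d - sref d d v) (int d + 2 - v)"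
    unfolding s sgn_same_def using v D d by auto
qed

lemma card_single: "card {v\<in>{a}. P v} = (if P a then 1 else 0)"
proof -
  have "{v\<in>{a}. P v} = (if P a then {a} else {})" by auto
  then show ?thesis by simp
qed

lemma small_mod: "0 \<le> x \<Longrightarrow> x < Dp d \<Longrightarrow> x mod Dp d = x" by simp

lemma sref_vals_mid:
  assumes k: "1 \<le> k" "k < d"
  shows "sref d k (int k) = int k + 1" "sref d k (int k + 1) = int k"
    "p \<in> {1..int d} \<Longrightarrow> p \<noteq> int k \<Longrightarrow> p \<noteq> int k + 1 \<Longrightarrow> sref d k p = p"
  using k by (auto simp: sref_mid Let_def Dp_def)

lemma sref_vals_0:
  assumes d: "2 \<le> d"
  shows "sref d 0 1 = -1" "sref d 0 0 = 0"
    "p \<in> {2..int d} \<Longrightarrow> sref d 0 p = p"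
  using d by (auto simp: sref_0 Let_def Dp_def)

lemma sref_vals_d:
  assumes d: "2 \<le> d"
  shows "sref d d (int d) = int d + 2" "sref d d (int d + 1) = int d + 1"
    "p \<in> {1..int d - 1} \<Longrightarrow> sref d d p = p"
  using d by (auto simp: sref_d Let_def Dp_def)

lemma cnt_comp:
  assumes "\<And>x. s (s x) = x"
  shows "cnt (h \<circ> s) p = card {v. (p - s v) * (h (s p) - h v) < 0}"
proof -
  have "cnt (h \<circ> s) p = card {q. (\<lambda>v. (p - s v) * (h (s p) - h v) < 0) (s q)}"
    unfolding cnt_def using assms by simp
  also have "\<dots> = card {v. (p - s v) * (h (s p) - h v) < 0}" by (rule card_reindex_invol) (rule assms)
  finally show ?thesis .
qed

lemma cnt_unmoved:
  assumes "\<And>x. s (s x) = x" "s p = p" "\<And>v. sgn_same (p - s v) (p - v)"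
  shows "cnt (h \<circ> s) p = cnt h p"
  unfolding cnt_comp[OF assms(1)] unfolding cnt_def assms(2) using sgn_same_mult[OF assms(3)] by simp

lemma A1_mid:
  assumes d: "2 \<le> d" and k: "1 \<le> k" "k < d" and h: "h \<in> Wgrp d"
  shows "h (int k) < h (int k + 1) \<Longrightarrow> Ssum d (h \<circ> sref d k) = Ssum d h + 2"
    and "h (int k) > h (int k + 1) \<Longrightarrow> Ssum d (h \<circ> sref d k) + 2 = Ssum d h"
proof -
  let ?s = "sref d k"
  have inv: "\<And>x. ?s (?s x) = x" using sref_invol[OF d] k by simp
  define R where "R = {1..int d} - {int k, int k + 1}"
  have U: "{1..int d} = R \<union> {int k, int k + 1}" using k by (auto simp: R_def)
  have fR: "finite R" by (simp add: R_def)
  have disj: "R \<inter> {int k, int k + 1} = {}" by (auto simp: R_def)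
  have sumR: "(\<Sum>p\<in>R. cnt (h \<circ> ?s) p) = (\<Sum>p\<in>R. cnt h p)"
  proof (rule sum.cong)
    fix p assume p: "p \<in> R"
    show "cnt (h \<circ> ?s) p = cnt h p"
      by (rule cnt_unmoved[OF inv]) (use p sref_vals_mid[OF k] sign_mid[OF d k] in \<open>auto simp: R_def\<close>)
  qed simp
  have Fk: "card {v. (int k - ?s v) * (h (int k + 1) - h v) < 0} + card {v\<in>{int k}. (int k + 1 - v) * (h (int k + 1) - h v) < 0}
     = card {v. (int k + 1 - v) * (h (int k + 1) - h v) < 0} + card {v\<in>{int k}. (int k - ?s v) * (h (int k + 1) - h v) < 0}"
    by (rule card_toggle) (use cnt_fin[OF h] sign_mid(2)[OF d k] sgn_same_mult in auto)
  have Fk1: "card {v. (int k + 1 - ?s v) * (h (int k) - h v) < 0} + card {v\<in>{int k + 1}. (int k - v) * (h (int k) - h v) < 0}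
     = card {v. (int k - v) * (h (int k) - h v) < 0} + card {v\<in>{int k + 1}. (int k + 1 - ?s v) * (h (int k) - h v) < 0}"
    by (rule card_toggle) (use cnt_fin[OF h] sign_mid(3)[OF d k] sgn_same_mult in auto)
  have S1: "Ssum d (h \<circ> ?s) = (\<Sum>p\<in>R. cnt h p) + cnt (h \<circ> ?s) (int k) + cnt (h \<circ> ?s) (int k + 1)"
  proof -
    have "Ssum d (h \<circ> ?s) = (\<Sum>p\<in>R. cnt (h \<circ> ?s) p) + (\<Sum>p\<in>{int k, int k + 1}. cnt (h \<circ> ?s) p)"
      unfolding Ssum_def U by (rule sum.union_disjoint) (use fR disj in auto)
    then show ?thesis using sumR by simp
  qed
  have S2: "Ssum d h = (\<Sum>p\<in>R. cnt h p) + cnt h (int k) + cnt h (int k + 1)"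
  proof -
    have "Ssum d h = (\<Sum>p\<in>R. cnt h p) + (\<Sum>p\<in>{int k, int k + 1}. cnt h p)"
      unfolding Ssum_def U by (rule sum.union_disjoint) (use fR disj in auto)
    then show ?thesis by simp
  qed
  have E1: "cnt (h \<circ> ?s) (int k) = card {v. (int k - ?s v) * (h (int k + 1) - h v) < 0}"
    using cnt_comp[OF inv, of h "int k"] sref_vals_mid[OF k] by simp
  have E2: "cnt (h \<circ> ?s) (int k + 1) = card {v. (int k + 1 - ?s v) * (h (int k) - h v) < 0}"
    using cnt_comp[OF inv, of h "int k + 1"] sref_vals_mid[OF k] by simp
  have E3: "cnt h (int k + 1) = card {v. (int k + 1 - v) * (h (int k + 1) - h v) < 0}"
    by (simp add: cnt_def)
  have E4: "cnt h (int k) = card {v. (int k - v) * (h (int k) - h v) < 0}"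
    by (simp add: cnt_def)
  have c1: "card {v\<in>{int k}. (int k + 1 - v) * (h (int k + 1) - h v) < 0} = (if h (int k + 1) < h (int k) then 1 else 0)"
    unfolding card_single by simp
  have c2: "card {v\<in>{int k}. (int k - ?s v) * (h (int k + 1) - h v) < 0} = (if h (int k) < h (int k + 1) then 1 else 0)"
    unfolding card_single using sref_vals_mid[OF k] by (simp add: mult_less_0_iff)
  have c3: "card {v\<in>{int k + 1}. (int k - v) * (h (int k) - h v) < 0} = (if h (int k + 1) < h (int k) then 1 else 0)"
    unfolding card_single by simp
  have c4: "card {v\<in>{int k + 1}. (int k + 1 - ?s v) * (h (int k) - h v) < 0} = (if h (int k) < h (int k + 1) then 1 else 0)"
    unfolding card_single using sref_vals_mid[OF k] by (simp add: mult_less_0_iff)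
  show "h (int k) < h (int k + 1) \<Longrightarrow> Ssum d (h \<circ> sref d k) = Ssum d h + 2"
  proof -
    assume a: "h (int k) < h (int k + 1)"
    have na: "\<not> h (int k + 1) < h (int k)" using a by simp
    show ?thesis using Fk Fk1 S1 S2 E1 E2 E3 E4 c1[unfolded if_not_P[OF na]] c2[unfolded if_P[OF a]]
      c3[unfolded if_not_P[OF na]] c4[unfolded if_P[OF a]] by linarith
  qed
  show "h (int k) > h (int k + 1) \<Longrightarrow> Ssum d (h \<circ> sref d k) + 2 = Ssum d h"
  proof -
    assume a: "h (int k + 1) < h (int k)"
    have na: "\<not> h (int k) < h (int k + 1)" using a by simp
    show ?thesis using Fk Fk1 S1 S2 E1 E2 E3 E4 c1[unfolded if_P[OF a]] c2[unfolded if_not_P[OF na]]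
      c3[unfolded if_P[OF a]] c4[unfolded if_not_P[OF na]] by linarith
  qed
qed

end


context fixes d :: nat begin

lemma A1_0:
  assumes d: "2 \<le> d" and h: "h \<in> Wgrp d"
  shows "h (-1) < h 1 \<Longrightarrow> Ssum d (h \<circ> sref d 0) = Ssum d h + 2"
    and "h (-1) > h 1 \<Longrightarrow> Ssum d (h \<circ> sref d 0) + 2 = Ssum d h"
proof -
  let ?s = "sref d 0"
  have inv: "\<And>x. ?s (?s x) = x" using sref_invol[OF d] by simp
  define R where "R = {2..int d}"
  have U: "{1..int d} = R \<union> {1}" using d by (auto simp: R_def)
  have fR: "finite R" by (simp add: R_def)
  have disj: "R \<inter> {1} = {}" by (auto simp: R_def)
  have sumR: "(\<Sum>p\<in>R. cnt (h \<circ> ?s) p) = (\<Sum>p\<in>R. cnt h p)"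
  proof (rule sum.cong)
    fix p assume p: "p \<in> R"
    show "cnt (h \<circ> ?s) p = cnt h p"
      by (rule cnt_unmoved[OF inv]) (use p sref_vals_0[OF d] sign_0[OF d] in \<open>auto simp: R_def\<close>)
  qed simp
  have F: "card {v. (1 - ?s v) * (h (-1) - h v) < 0} + card {v\<in>{0,1}. (-1 - v) * (h (-1) - h v) < 0}
     = card {v. (-1 - v) * (h (-1) - h v) < 0} + card {v\<in>{0,1}. (1 - ?s v) * (h (-1) - h v) < 0}"
    by (rule card_toggle) (use cnt_fin[OF h] sign_0(2)[OF d] sgn_same_mult in auto)
  have E1: "cnt (h \<circ> ?s) 1 = card {v. (1 - ?s v) * (h (-1) - h v) < 0}"
    using cnt_comp[OF inv, of h 1] sref_vals_0[OF d] by simp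
  have E2: "cnt h 1 = card {v. (-1 - v) * (h (-1) - h v) < 0}"
    using cnt_neg[OF h, of 1] by (simp add: cnt_def)
  have hn: "h (-1) = - h 1" using W_neg[OF h, of 1] by simp
  have h0: "h 0 = 0" using W_0[OF h] .
  have h1: "h 1 \<noteq> 0" using W_inj[OF h, of 1 0] h0 by simp
  have c1: "{v\<in>{0,1}. (-1 - v) * (h (-1) - h v) < 0} = (if h 1 < 0 then {0,1} else {})"
    using hn h0 h1 by (auto simp: mult_less_0_iff)
  have c2: "{v\<in>{0,1}. (1 - ?s v) * (h (-1) - h v) < 0} = (if h 1 > 0 then {0,1} else {})"
    using hn h0 h1 sref_vals_0[OF d] by (auto simp: mult_less_0_iff)
  have S1: "Ssum d (h \<circ> ?s) = (\<Sum>p\<in>R. cnt h p) + cnt (h \<circ> ?s) 1"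
  proof -
    have "Ssum d (h \<circ> ?s) = (\<Sum>p\<in>R. cnt (h \<circ> ?s) p) + (\<Sum>p\<in>{1}. cnt (h \<circ> ?s) p)"
      unfolding Ssum_def U by (rule sum.union_disjoint) (use fR disj in auto)
    then show ?thesis using sumR by simp
  qed
  have S2: "Ssum d h = (\<Sum>p\<in>R. cnt h p) + cnt h 1"
  proof -
    have "Ssum d h = (\<Sum>p\<in>R. cnt h p) + (\<Sum>p\<in>{1}. cnt h p)"
      unfolding Ssum_def U by (rule sum.union_disjoint) (use fR disj in auto)
    then show ?thesis by simp
  qed
  show "h (-1) < h 1 \<Longrightarrow> Ssum d (h \<circ> sref d 0) = Ssum d h + 2"
  proof -
    assume "h (-1) < h 1"
    then have a: "h 1 > 0" and na: "\<not> h 1 < 0" using hn by auto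
    have X1: "card {v\<in>{0,1}. (-1 - v) * (h (-1) - h v) < 0} = 0" unfolding c1[unfolded if_not_P[OF na]] by simp
    have X2: "card {v\<in>{0,1}. (1 - ?s v) * (h (-1) - h v) < 0} = 2" unfolding c2[unfolded if_P[OF a]] by simp
    show ?thesis using F S1 S2 E1 E2 X1 X2 by linarith
  qed
  show "h (-1) > h 1 \<Longrightarrow> Ssum d (h \<circ> sref d 0) + 2 = Ssum d h"
  proof -
    assume "h (-1) > h 1"
    then have a: "h 1 < 0" and na: "\<not> h 1 > 0" using hn by auto
    have X1: "card {v\<in>{0,1}. (-1 - v) * (h (-1) - h v) < 0} = 2" unfolding c1[unfolded if_P[OF a]] by simp
    have X2: "card {v\<in>{0,1}. (1 - ?s v) * (h (-1) - h v) < 0} = 0" unfolding c2[unfolded if_not_P[OF na]] by simp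
    show ?thesis using F S1 S2 E1 E2 X1 X2 by linarith
  qed
qed

lemma A1_d:
  assumes d: "2 \<le> d" and h: "h \<in> Wgrp d"
  shows "h (int d) < h (int d + 2) \<Longrightarrow> Ssum d (h \<circ> sref d d) = Ssum d h + 2"
    and "h (int d) > h (int d + 2) \<Longrightarrow> Ssum d (h \<circ> sref d d) + 2 = Ssum d h"
proof -
  let ?s = "sref d d"
  have inv: "\<And>x. ?s (?s x) = x" using sref_invol[OF d] by simp
  define R where "R = {1..int d - 1}"
  have U: "{1..int d} = R \<union> {int d}" using d by (auto simp: R_def)
  have fR: "finite R" by (simp add: R_def)
  have disj: "R \<inter> {int d} = {}" by (auto simp: R_def)
  have sumR: "(\<Sum>p\<in>R. cnt (h \<circ> ?s) p) = (\<Sum>p\<in>R. cnt h p)"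
  proof (rule sum.cong)
    fix p assume p: "p \<in> R"
    show "cnt (h \<circ> ?s) p = cnt h p"
      by (rule cnt_unmoved[OF inv]) (use p sref_vals_d[OF d] sign_d[OF d] in \<open>auto simp: R_def\<close>)
  qed simp
  have F: "card {v. (int d - ?s v) * (h (int d + 2) - h v) < 0} + card {v\<in>{int d, int d + 1}. (int d + 2 - v) * (h (int d + 2) - h v) < 0}
     = card {v. (int d + 2 - v) * (h (int d + 2) - h v) < 0} + card {v\<in>{int d, int d + 1}. (int d - ?s v) * (h (int d + 2) - h v) < 0}"
    by (rule card_toggle) (use cnt_fin[OF h] sign_d(2)[OF d] sgn_same_mult in auto)
  have E1: "cnt (h \<circ> ?s) (int d) = card {v. (int d - ?s v) * (h (int d + 2) - h v) < 0}"
    using cnt_comp[OF inv, of h "int d"] sref_vals_d[OF d] by simp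
  have E2: "cnt h (int d) = card {v. (int d + 2 - v) * (h (int d + 2) - h v) < 0}"
    using cnt_refl[OF h, of "int d"] by (simp add: cnt_def Dp_def)
  have hn: "h (int d + 2) = Dp d - h (int d)" using W_refl[OF h, of 1 "int d"] by (simp add: Dp_def)
  have hf: "h (int d + 1) = int d + 1" using W_fix[OF h] .
  have h1: "h (int d) \<noteq> int d + 1" using W_inj[OF h, of "int d" "int d + 1"] hf by simp
  have D: "Dp d = 2 * int d + 2" by (simp add: Dp_def)
  have c1: "{v\<in>{int d, int d + 1}. (int d + 2 - v) * (h (int d + 2) - h v) < 0} = (if h (int d) > int d + 1 then {int d, int d + 1} else {})"
    using hn hf h1 D by (auto simp: mult_less_0_iff)
  have c2: "{v\<in>{int d, int d + 1}. (int d - ?s v) * (h (int d + 2) - h v) < 0} = (if h (int d) < int d + 1 then {int d, int d + 1} else {})"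
    using hn hf h1 D sref_vals_d[OF d] by (auto simp: mult_less_0_iff)
  have S1: "Ssum d (h \<circ> ?s) = (\<Sum>p\<in>R. cnt h p) + cnt (h \<circ> ?s) (int d)"
  proof -
    have "Ssum d (h \<circ> ?s) = (\<Sum>p\<in>R. cnt (h \<circ> ?s) p) + (\<Sum>p\<in>{int d}. cnt (h \<circ> ?s) p)"
      unfolding Ssum_def U by (rule sum.union_disjoint) (use fR disj in auto)
    then show ?thesis using sumR by simp
  qed
  have S2: "Ssum d h = (\<Sum>p\<in>R. cnt h p) + cnt h (int d)"
  proof -
    have "Ssum d h = (\<Sum>p\<in>R. cnt h p) + (\<Sum>p\<in>{int d}. cnt h p)"
      unfolding Ssum_def U by (rule sum.union_disjoint) (use fR disj in auto)
    then show ?thesis by simp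
  qed
  show "h (int d) < h (int d + 2) \<Longrightarrow> Ssum d (h \<circ> sref d d) = Ssum d h + 2"
  proof -
    assume "h (int d) < h (int d + 2)"
    then have a: "h (int d) < int d + 1" and na: "\<not> h (int d) > int d + 1" using hn D by auto
    have X1: "card {v\<in>{int d, int d + 1}. (int d + 2 - v) * (h (int d + 2) - h v) < 0} = 0" unfolding c1[unfolded if_not_P[OF na]] by simp
    have X2: "card {v\<in>{int d, int d + 1}. (int d - ?s v) * (h (int d + 2) - h v) < 0} = 2" unfolding c2[unfolded if_P[OF a]] by simp
    show ?thesis using F S1 S2 E1 E2 X1 X2 by linarith
  qed
  show "h (int d) > h (int d + 2) \<Longrightarrow> Ssum d (h \<circ> sref d d) + 2 = Ssum d h"
  proof -
    assume "h (int d) > h (int d + 2)"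
    then have a: "h (int d) > int d + 1" and na: "\<not> h (int d) < int d + 1" using hn D by auto
    have X1: "card {v\<in>{int d, int d + 1}. (int d + 2 - v) * (h (int d + 2) - h v) < 0} = 2" unfolding c1[unfolded if_P[OF a]] by simp
    have X2: "card {v\<in>{int d, int d + 1}. (int d - ?s v) * (h (int d + 2) - h v) < 0} = 0" unfolding c2[unfolded if_not_P[OF na]] by simp
    show ?thesis using F S1 S2 E1 E2 X1 X2 by linarith
  qed
qed

end


definition aa :: "nat \<Rightarrow> int" where "aa k = (if k = 0 then -1 else int k)"
definition bb :: "nat \<Rightarrow> nat \<Rightarrow> int" where
  "bb d k = (if k = 0 then 1 else if k = d then int d + 2 else int k + 1)"

context fixes d :: nat begin

lemma A1:
  assumes d: "2 \<le> d" and h: "h \<in> Wgrp d" and k: "k \<le> d"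
  shows "h (aa k) < h (bb d k) \<Longrightarrow> Ssum d (h \<circ> sref d k) = Ssum d h + 2"
    and "h (aa k) > h (bb d k) \<Longrightarrow> Ssum d (h \<circ> sref d k) + 2 = Ssum d h"
proof -
  consider "k = 0" | "k = d" | "1 \<le> k \<and> k < d" using k by linarith
  then have "(h (aa k) < h (bb d k) \<longrightarrow> Ssum d (h \<circ> sref d k) = Ssum d h + 2) \<and>
    (h (aa k) > h (bb d k) \<longrightarrow> Ssum d (h \<circ> sref d k) + 2 = Ssum d h)"
  proof cases
    case 1 then show ?thesis using A1_0[OF d h] by (simp add: aa_def bb_def)
  next
    case 2 then show ?thesis using A1_d[OF d h] d by (simp add: aa_def bb_def)
  next
    case 3
    then have k1: "1 \<le> k" "k < d" by auto
    show ?thesis using A1_mid[OF d k1 h] k1 by (simp add: aa_def bb_def)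
  qed
  then show "h (aa k) < h (bb d k) \<Longrightarrow> Ssum d (h \<circ> sref d k) = Ssum d h + 2"
    and "h (aa k) > h (bb d k) \<Longrightarrow> Ssum d (h \<circ> sref d k) + 2 = Ssum d h" by auto
qed

lemma aa_ne_bb: "2 \<le> d \<Longrightarrow> k \<le> d \<Longrightarrow> aa k \<noteq> bb d k"
  by (auto simp: aa_def bb_def)

lemma A1_le:
  assumes d: "2 \<le> d" and h: "h \<in> Wgrp d" and k: "k \<le> d"
  shows "Ssum d (h \<circ> sref d k) \<le> Ssum d h + 2"
proof -
  have "h (aa k) \<noteq> h (bb d k)" using W_inj[OF h] aa_ne_bb[OF d k] by simp
  then have "h (aa k) < h (bb d k) \<or> h (aa k) > h (bb d k)" by linarith
  then show ?thesis using A1[OF d h k] by fastforce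
qed

lemma A2:
  assumes d: "2 \<le> d" and h: "h \<in> Wgrp d" and nd: "\<And>k. k \<le> d \<Longrightarrow> h (aa k) < h (bb d k)"
  shows "h = id"
proof -
  have h1: "h 1 > 0" using nd[of 0] W_neg[OF h, of 1] by (simp add: aa_def bb_def)
  have hk: "h (int k) < h (int k + 1)" if "1 \<le> k" "k < d" for k
    using nd[of k] that by (simp add: aa_def bb_def)
  have hd: "h (int d) \<le> int d"
  proof -
    have "h (int d) < h (int d + 2)" using nd[of d] d by (simp add: aa_def bb_def)
    moreover have "h (int d + 2) = Dp d - h (int d)" using W_refl[OF h, of 1 "int d"] by (simp add: Dp_def)
    ultimately show ?thesis by (simp add: Dp_def)
  qed
  have ge: "n \<ge> 1 \<longrightarrow> n \<le> d \<longrightarrow> h (int n) \<ge> int n" for n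
  proof (induction n)
    case 0 then show ?case by simp
  next
    case (Suc n)
    show ?case
    proof (intro impI)
      assume a0: "1 \<le> Suc n" and a: "Suc n \<le> d"
      show "int (Suc n) \<le> h (int (Suc n))"
      proof (cases "n = 0")
        case True then show ?thesis using h1 by simp
      next
        case False
        have n1: "1 \<le> n" "n < d" using False a by auto
        have "int n \<le> h (int n)" using Suc.IH n1 by simp
        moreover have "h (int n) < h (int n + 1)" using hk[OF n1] .
        ultimately have r: "int n + 1 \<le> h (int n + 1)" by simp
        show ?thesis unfolding of_nat_Suc add.commute[of 1 "int n"] by (rule r)
      qed
    qed
  qed
  have le: "m < d \<longrightarrow> h (int (d - m)) \<le> int (d - m)" for m
  proof (induction m)
    case 0 then show ?case using hd by simp
  next
    case (Suc m)
    show ?case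
    proof
      assume m: "Suc m < d"
      have "h (int (d - Suc m)) < h (int (d - Suc m) + 1)" using hk[of "d - Suc m"] m by simp
      moreover have "int (d - Suc m) + 1 = int (d - m)" using m by simp
      ultimately show "h (int (d - Suc m)) \<le> int (d - Suc m)" using Suc m by simp
    qed
  qed
  have fix1: "h t = t" if "1 \<le> t" "t \<le> int d" for t
  proof -
    define n where "n = nat t"
    have n: "t = int n" using that by (simp add: n_def)
    have "h (int n) \<ge> int n" using ge[of n] n that by simp
    moreover have "h (int (d - (d - n))) \<le> int (d - (d - n))" using le[of "d - n"] n that by simp
    ultimately show ?thesis using n that by simp
  qed
  show ?thesis
  proof
    fix x
    have "h x = extW d h x" by (rule W_ext[OF h])
    also have "\<dots> = extW d id x"
    proof -
      define t where "t = x mod Dp d"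
      have m: "0 \<le> t" "t < Dp d" using Dp_pos[of d] by (auto simp: t_def)
      have D: "Dp d = 2 * int d + 2" by (simp add: Dp_def)
      have f1: "1 \<le> t \<Longrightarrow> t \<le> int d \<Longrightarrow> h t = t" using fix1 by simp
      have f2: "int d + 1 < t \<Longrightarrow> h (Dp d - t) = Dp d - t" using fix1 m D by simp
      show ?thesis unfolding extW_def Let_def t_def[symmetric] using f1 f2 m D by auto
    qed
    also have "\<dots> = id x" using W_ext[OF W_id, of x] by simp
    finally show "h x = id x" .
  qed
qed

lemma Ssum_id: "Ssum d id = 0"
proof -
  have "{q. (p - q) * (id p - id q) < 0} = {}" for p :: int
    by (auto simp: mult_less_0_iff)
  then show ?thesis unfolding Ssum_def cnt_def by simp
qed

lemma A4: "2 \<le> d \<Longrightarrow> set ws \<subseteq> {0..d} \<Longrightarrow> Ssum d (wordprod d ws) \<le> 2 * length ws"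
proof (induction ws rule: rev_induct)
  case Nil then show ?case using Ssum_id Ssum_id[unfolded id_def] by (simp add: wordprod_Nil)
next
  case (snoc k ws)
  have W: "wordprod d ws \<in> Wgrp d" using wordprod_W snoc by auto
  have "Ssum d (wordprod d (ws @ [k])) = Ssum d (wordprod d ws \<circ> sref d k)" by (simp add: wordprod_snoc)
  also have "\<dots> \<le> Ssum d (wordprod d ws) + 2" using A1_le[OF _ W, of k] snoc by auto
  finally show ?case using snoc by auto
qed

lemma A5:
  assumes d: "2 \<le> d"
  shows "h \<in> Wgrp d \<Longrightarrow> \<exists>ws. set ws \<subseteq> {0..d} \<and> 2 * length ws = Ssum d h \<and> wordprod d ws = h"
proof (induction "Ssum d h" arbitrary: h rule: less_induct)
  case less
  show ?case
  proof (cases "\<exists>k\<le>d. h (aa k) > h (bb d k)")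
    case True
    then obtain k where k: "k \<le> d" "h (aa k) > h (bb d k)" by blast
    let ?h' = "h \<circ> sref d k"
    have W': "?h' \<in> Wgrp d" using W_comp[OF less.prems sref_W[OF d k(1)]] .
    have S: "Ssum d ?h' + 2 = Ssum d h" using A1(2)[OF d less.prems k(1) k(2)] .
    obtain ws where ws: "set ws \<subseteq> {0..d}" "2 * length ws = Ssum d ?h'" "wordprod d ws = ?h'"
      using less.hyps[OF _ W'] S by auto
    have "wordprod d (ws @ [k]) = h"
      using ws(3) sref_invol[OF d k(1)] by (auto simp: wordprod_snoc fun_eq_iff)
    then show ?thesis using ws k S by (intro exI[of _ "ws @ [k]"]) auto
  next
    case False
    have "h (aa k) < h (bb d k)" if "k \<le> d" for k
    proof -
      have "h (aa k) \<noteq> h (bb d k)" using W_inj[OF less.prems] aa_ne_bb[OF d that] by simp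
      then show ?thesis using False that by force
    qed
    then have "h = id" using A2[OF d less.prems] by blast
    then show ?thesis using Ssum_id Ssum_id[unfolded id_def] by (intro exI[of _ "[]"]) (simp add: wordprod_Nil)
  qed
qed

lemma A6:
  assumes d: "2 \<le> d" and h: "h \<in> Wgrp d"
  shows "2 * clen d h = Ssum d h"
proof -
  obtain ws where ws: "set ws \<subseteq> {0..d}" "2 * length ws = Ssum d h" "wordprod d ws = h"
    using A5[OF d h] by blast
  have "clen d h = length ws"
    unfolding clen_def
  proof (rule Least_equality)
    show "\<exists>ws'. set ws' \<subseteq> {0..d} \<and> length ws' = length ws \<and> wordprod d ws' = h" using ws by blast
  next
    fix m assume "\<exists>ws'. set ws' \<subseteq> {0..d} \<and> length ws' = m \<and> wordprod d ws' = h"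
    then obtain ws' where "set ws' \<subseteq> {0..d}" "length ws' = m" "wordprod d ws' = h" by blast
    then show "length ws \<le> m" using A4[OF d, of ws'] ws by auto
  qed
  then show ?thesis using ws by simp
qed

lemma wordprod_rev:
  assumes d: "2 \<le> d"
  shows "set ws \<subseteq> {0..d} \<Longrightarrow> wordprod d (rev ws) \<circ> wordprod d ws = id"
proof (induction ws)
  case Nil then show ?case by (simp add: wordprod_Nil)
next
  case (Cons k ws)
  have k: "k \<le> d" using Cons by auto
  have "wordprod d (rev (k # ws)) \<circ> wordprod d (k # ws)
        = wordprod d (rev ws) \<circ> (sref d k \<circ> sref d k) \<circ> wordprod d ws"
    by (simp add: wordprod_snoc wordprod_Cons o_assoc)
  also have "sref d k \<circ> sref d k = id" using sref_invol[OF d k] by (auto simp: fun_eq_iff)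
  finally show ?case using Cons by simp
qed

lemma B1:
  assumes d: "2 \<le> d" and h: "h \<in> Wgrp d"
  shows "clen d (inv h) = clen d h"
proof -
  have le: "Ssum d (inv g) \<le> Ssum d g" if g: "g \<in> Wgrp d" for g
  proof -
    obtain ws where ws: "set ws \<subseteq> {0..d}" "2 * length ws = Ssum d g" "wordprod d ws = g"
      using A5[OF d g] by blast
    have "inv g = wordprod d (rev ws)"
    proof (rule inv_unique_comp)
      show "g \<circ> wordprod d (rev ws) = id" using wordprod_rev[OF d, of "rev ws"] ws by simp
      show "wordprod d (rev ws) \<circ> g = id" using wordprod_rev[OF d, of ws] ws by simp
    qed
    then have "Ssum d (inv g) \<le> 2 * length (rev ws)" using A4[OF d, of "rev ws"] ws by simp
    then show ?thesis using ws by simp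
  qed
  have "inv (inv h) = h" using W_bij[OF h] by (simp add: inv_inv_eq)
  then have "Ssum d (inv h) = Ssum d h" using le[OF h] le[OF W_inv[OF h]] by simp
  then show ?thesis using A6[OF d h] A6[OF d W_inv[OF h]] by simp
qed

end


lemma divmod_unique:
  fixes j q n :: int
  assumes "0 \<le> j" "j < n"
  shows "(j + q * n) div n = q" "(j + q * n) mod n = j"
  using assms by simp_all

lemma img_add: "(\<lambda>x. x + c) ` {a..b::int} = {a + c..b + c}"
proof
  show "{a + c..b + c} \<subseteq> (\<lambda>x. x + c) ` {a..b}"
  proof
    fix x assume "x \<in> {a + c..b + c}"
    then show "x \<in> (\<lambda>x. x + c) ` {a..b}" by (intro image_eqI[where x="x - c"]) auto
  qed
qed auto

lemma img_sub: "(\<lambda>x. c - x) ` {a..b::int} = {c - b..c - a}"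
proof
  show "{c - b..c - a} \<subseteq> (\<lambda>x. c - x) ` {a..b}"
  proof
    fix x assume "x \<in> {c - b..c - a}"
    then show "x \<in> (\<lambda>x. c - x) ` {a..b}" by (intro image_eqI[where x="c - x"]) auto
  qed
qed auto

definition lbI :: "nat \<Rightarrow> nat \<Rightarrow> (nat \<Rightarrow> nat) \<Rightarrow> int \<Rightarrow> int" where
  "lbI r d lam j = (if j = 0 then - int (lam 0) else if j \<le> int r then int (psum lam (nat (j - 1))) + 1
     else int d + 1 - int (lam (r + 1)))"
definition ubI :: "nat \<Rightarrow> nat \<Rightarrow> (nat \<Rightarrow> nat) \<Rightarrow> int \<Rightarrow> int" where
  "ubI r d lam j = (if j = 0 then int (lam 0) else if j \<le> int r then int (psum lam (nat j))
     else int d + 1 + int (lam (r + 1)))"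

definition loR :: "nat \<Rightarrow> nat \<Rightarrow> (nat \<Rightarrow> nat) \<Rightarrow> int \<Rightarrow> int" where
  "loR r d lam i = (let q = i div np r; j = i mod np r in
     if j \<le> int r + 1 then lbI r d lam j + q * Dp d else (q + 1) * Dp d - ubI r d lam (np r - j))"
definition hiR :: "nat \<Rightarrow> nat \<Rightarrow> (nat \<Rightarrow> nat) \<Rightarrow> int \<Rightarrow> int" where
  "hiR r d lam i = (let q = i div np r; j = i mod np r in
     if j \<le> int r + 1 then ubI r d lam j + q * Dp d else (q + 1) * Dp d - lbI r d lam (np r - j))"

lemma Rbase_eq: "0 \<le> j \<Longrightarrow> Rbase r d lam (nat j) = {lbI r d lam j .. ubI r d lam j}"
  unfolding Rbase_def lbI_def ubI_def
  by (auto simp: nat_diff_distrib)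

lemma np_pos: "np r > 0" by (simp add: np_def)

lemma Rset_eq: "Rset r d lam i = {loR r d lam i .. hiR r d lam i}"
proof -
  define q where "q = i div np r"
  define j where "j = i mod np r"
  have j: "0 \<le> j" "j < np r" using np_pos[of r] by (auto simp: j_def)
  show ?thesis
  proof (cases "j \<le> int r + 1")
    case True
    have "Rset r d lam i = (\<lambda>x. x + q * Dp d) ` Rbase r d lam (nat j)"
      unfolding Rset_def Let_def q_def[symmetric] j_def[symmetric] using True by simp
    also have "\<dots> = {lbI r d lam j + q * Dp d .. ubI r d lam j + q * Dp d}"
      using Rbase_eq[OF j(1)] img_add by simp
    finally show ?thesis unfolding loR_def hiR_def Let_def q_def[symmetric] j_def[symmetric] using True by simp
  next
    case False
    have "Rset r d lam i = (\<lambda>x. (q + 1) * Dp d - x) ` Rbase r d lam (nat (np r - j))"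
      unfolding Rset_def Let_def q_def[symmetric] j_def[symmetric] using False by simp
    also have "\<dots> = {(q + 1) * Dp d - ubI r d lam (np r - j) .. (q + 1) * Dp d - lbI r d lam (np r - j)}"
      using Rbase_eq[of "np r - j"] j img_sub by simp
    finally show ?thesis unfolding loR_def hiR_def Let_def q_def[symmetric] j_def[symmetric] using False by simp
  qed
qed

lemma loR_at: "0 \<le> j \<Longrightarrow> j < np r \<Longrightarrow> loR r d lam (j + q * np r) =
   (if j \<le> int r + 1 then lbI r d lam j + q * Dp d else (q + 1) * Dp d - ubI r d lam (np r - j))"
  unfolding loR_def Let_def divmod_unique by simp

lemma hiR_at: "0 \<le> j \<Longrightarrow> j < np r \<Longrightarrow> hiR r d lam (j + q * np r) =
   (if j \<le> int r + 1 then ubI r d lam j + q * Dp d else (q + 1) * Dp d - lbI r d lam (np r - j))"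
  unfolding hiR_def Let_def divmod_unique by simp

lemma i_decomp:
  obtains q j where "i = j + q * np r" "0 \<le> j" "j < np r"
proof -
  have "i = i mod np r + i div np r * np r" by simp
  moreover have "0 \<le> i mod np r" "i mod np r < np r" using np_pos[of r] by auto
  ultimately show ?thesis using that by blast
qed

lemma psum_Suc: "psum lam (Suc j) = psum lam j + lam (Suc j)"
  by (simp add: psum_def)

lemma psum_mono: "i \<le> j \<Longrightarrow> psum lam i \<le> psum lam j"
  unfolding psum_def by (rule sum_mono2) auto

context fixes r d :: nat and lam :: "nat \<Rightarrow> nat" assumes lam: "lam \<in> Lam r d"
begin

lemma psum_r: "psum lam r + lam (r + 1) = d"
  using lam unfolding Lam_def psum_def by simp

lemma lb_le_ub: "lbI r d lam j \<le> ubI r d lam j + 1"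
proof -
  have "psum lam (nat (j - 1)) \<le> psum lam (nat j)" by (rule psum_mono) simp
  then show ?thesis unfolding lbI_def ubI_def by auto
qed

lemma lb_succ: "0 \<le> j \<Longrightarrow> j \<le> int r \<Longrightarrow> lbI r d lam (j + 1) = ubI r d lam j + 1"
proof -
  assume j: "0 \<le> j" "j \<le> int r"
  have pr: "psum lam r + lam (r + 1) = d" by (rule psum_r)
  have p0: "psum lam 0 = lam 0" by (simp add: psum_def)
  consider "j = 0" "r = 0" | "j = 0" "r \<ge> 1" | "j \<ge> 1" "j < int r" | "j \<ge> 1" "j = int r" using j by linarith
  then show ?thesis
  proof cases
    case 1 then show ?thesis using pr p0 unfolding lbI_def ubI_def by simp
  next
    case 2 then show ?thesis using p0 unfolding lbI_def ubI_def by simp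
  next
    case 3 then show ?thesis unfolding lbI_def ubI_def by simp
  next
    case 4
    then have "nat j = r" by simp
    then show ?thesis using 4 pr unfolding lbI_def ubI_def by simp
  qed
qed

lemma lo_succ: "loR r d lam (i + 1) = hiR r d lam i + 1"
proof -
  obtain q j where i: "i = j + q * np r" and j: "0 \<le> j" "j < np r" by (rule i_decomp)
  have n: "np r = 2 * int r + 2" by (simp add: np_def)
  have D: "Dp d = 2 * int d + 2" by (simp add: Dp_def)
  have pr: "psum lam r + lam (r + 1) = d" by (rule psum_r)
  have hi: "hiR r d lam i = (if j \<le> int r + 1 then ubI r d lam j + q * Dp d else (q + 1) * Dp d - lbI r d lam (np r - j))"
    unfolding i by (rule hiR_at[OF j])
  consider "j \<le> int r" | "j = int r + 1" "r \<ge> 1" | "j = int r + 1" "r = 0"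
    | "int r + 2 \<le> j" "j + 1 < np r" | "int r + 2 \<le> j" "j + 1 = np r" using j n by linarith
  then show ?thesis
  proof cases
    case 1
    have "loR r d lam (i + 1) = loR r d lam ((j + 1) + q * np r)" by (simp add: i algebra_simps)
    also have "\<dots> = lbI r d lam (j + 1) + q * Dp d" using loR_at[of "j + 1" r d lam q] j 1 n by simp
    finally show ?thesis using hi 1 lb_succ[OF j(1) 1] by simp
  next
    case 2
    have "loR r d lam (i + 1) = loR r d lam ((int r + 2) + q * np r)" using 2 by (simp add: i algebra_simps)
    also have "\<dots> = (q + 1) * Dp d - ubI r d lam (np r - (int r + 2))" using loR_at[of "int r + 2" r d lam q] 2 n by simp
    also have "np r - (int r + 2) = int r" using n by simp
    finally show ?thesis using hi 2 pr D by (simp add: ubI_def lbI_def algebra_simps)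
  next
    case 3
    have "loR r d lam (i + 1) = loR r d lam (0 + (q + 1) * np r)" using 3 n by (simp add: i algebra_simps)
    also have "\<dots> = lbI r d lam 0 + (q + 1) * Dp d" using loR_at[of 0 r d lam "q + 1"] n by simp
    finally show ?thesis using hi 3 pr D by (simp add: ubI_def lbI_def psum_def algebra_simps)
  next
    case 4
    have "loR r d lam (i + 1) = loR r d lam ((j + 1) + q * np r)" by (simp add: i algebra_simps)
    also have "\<dots> = (q + 1) * Dp d - ubI r d lam (np r - (j + 1))" using loR_at[of "j + 1" r d lam q] j 4 n by simp
    finally have e: "loR r d lam (i + 1) = (q + 1) * Dp d - ubI r d lam (np r - j - 1)" by (simp add: algebra_simps)
    have "lbI r d lam (np r - j - 1 + 1) = ubI r d lam (np r - j - 1) + 1"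
      by (rule lb_succ) (use 4 n in auto)
    then show ?thesis using e hi 4 by simp
  next
    case 5
    have jj: "j = np r - 1" using 5 by simp
    have e0: "i + 1 = 0 + (q + 1) * np r" unfolding i jj by (simp add: algebra_simps)
    have "loR r d lam (i + 1) = loR r d lam (0 + (q + 1) * np r)" unfolding e0 ..
    also have "\<dots> = lbI r d lam 0 + (q + 1) * Dp d" using loR_at[of 0 r d lam "q + 1"] n by simp
    finally have e: "loR r d lam (i + 1) = lbI r d lam 0 + (q + 1) * Dp d" .
    have l1: "lbI r d lam 1 = ubI r d lam 0 + 1" using lb_succ[of 0] by simp
    have nj: "np r - j = 1" using 5 by simp
    have h2: "hiR r d lam i = (q + 1) * Dp d - lbI r d lam 1" using hi 5 nj by simp
    have "lbI r d lam 0 = - ubI r d lam 0" by (simp add: lbI_def ubI_def)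
    then show ?thesis using e h2 l1 by simp
  qed
qed

lemma lo_le_hi: "loR r d lam i \<le> hiR r d lam i + 1"
  unfolding loR_def hiR_def Let_def
  using lb_le_ub[of "i mod np r"] lb_le_ub[of "np r - i mod np r"] by auto

lemma lo_step: "loR r d lam i \<le> loR r d lam (i + 1)"
  using lo_succ[of i] lo_le_hi[of i] by simp

lemma lo_mono_nat: "loR r d lam i \<le> loR r d lam (i + int k)"
proof (induction k)
  case 0 then show ?case by simp
next
  case (Suc k)
  have e: "i + int (Suc k) = (i + int k) + 1" by simp
  show ?case unfolding e using lo_step[of "i + int k"] Suc.IH by linarith
qed

lemma lo_mono: "i \<le> i' \<Longrightarrow> loR r d lam i \<le> loR r d lam i'"
  using lo_mono_nat[of i "nat (i' - i)"] by simp

lemma mem_R: "z \<in> Rset r d lam i \<longleftrightarrow> loR r d lam i \<le> z \<and> z \<le> hiR r d lam i"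
  unfolding Rset_eq by simp

lemma R_order: "z \<in> Rset r d lam i \<Longrightarrow> z' \<in> Rset r d lam i' \<Longrightarrow> i < i' \<Longrightarrow> z < z'"
proof -
  assume a: "z \<in> Rset r d lam i" "z' \<in> Rset r d lam i'" "i < i'"
  have "z \<le> hiR r d lam i" using a mem_R by blast
  also have "\<dots> < loR r d lam (i + 1)" using lo_succ[of i] by simp
  also have "\<dots> \<le> loR r d lam i'" using a(3) by (intro lo_mono) simp
  also have "\<dots> \<le> z'" using a mem_R by blast
  finally show ?thesis .
qed

lemma R_unique: "z \<in> Rset r d lam i \<Longrightarrow> z \<in> Rset r d lam i' \<Longrightarrow> i = i'"
  using R_order[of z i z i'] R_order[of z i' z i] by (cases "i < i'"; cases "i' < i") auto

lemma lo_mult: "loR r d lam (m * np r) = - int (lam 0) + m * Dp d"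
  using loR_at[of 0 r d lam m] np_pos[of r] by (simp add: lbI_def)

lemma ivt: "f a \<le> (z::int) \<Longrightarrow> z < f (a + int k) \<Longrightarrow> \<exists>i. f i \<le> z \<and> z < f (i + 1)"
proof (induction k arbitrary: a)
  case 0 then show ?case by simp
next
  case (Suc k)
  show ?case
  proof (cases "z < f (a + 1)")
    case True then show ?thesis using Suc by blast
  next
    case False
    have e: "a + int (Suc k) = (a + 1) + int k" by simp
    have "f (a + 1) \<le> z" using False by simp
    moreover have "z < f ((a + 1) + int k)" using Suc.prems(2) unfolding e .
    ultimately show ?thesis using Suc.IH by blast
  qed
qed

lemma R_exists: "\<exists>i. z \<in> Rset r d lam i"
proof -
  define m where "m = z div Dp d"
  have zm: "m * Dp d \<le> z" "z < m * Dp d + Dp d" unfolding m_def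
    using div_mult_mod_eq[of z "Dp d"] pos_mod_sign[of "Dp d" z] pos_mod_bound[of "Dp d" z] Dp_pos[of d]
    by linarith+
  have l0: "lam 0 \<le> d" using psum_r psum_mono[of 0 r lam] by (simp add: psum_def)
  have D: "Dp d = 2 * int d + 2" by (simp add: Dp_def)
  have a: "loR r d lam ((m - 1) * np r) \<le> z" using lo_mult[of "m - 1"] zm by (simp add: algebra_simps)
  have b: "z < loR r d lam ((m - 1) * np r + int (nat (3 * np r)))"
  proof -
    have "(m - 1) * np r + int (nat (3 * np r)) = (m + 2) * np r" using np_pos[of r] by (simp add: algebra_simps)
    then show ?thesis using lo_mult[of "m + 2"] zm l0 D by (simp add: algebra_simps)
  qed
  obtain i where i: "loR r d lam i \<le> z" "z < loR r d lam (i + 1)" using ivt[OF a b] by blast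
  then have "z \<in> Rset r d lam i" unfolding mem_R using lo_succ[of i] by simp
  then show ?thesis by blast
qed

lemma lo_shift: "loR r d lam (i + np r) = loR r d lam i + Dp d"
proof -
  have "(i + np r) div np r = i div np r + 1" "(i + np r) mod np r = i mod np r"
    using np_pos[of r] by simp_all
  then show ?thesis unfolding loR_def Let_def by (simp add: algebra_simps)
qed

lemma hi_shift: "hiR r d lam (i + np r) = hiR r d lam i + Dp d"
proof -
  have "(i + np r) div np r = i div np r + 1" "(i + np r) mod np r = i mod np r"
    using np_pos[of r] by simp_all
  then show ?thesis unfolding hiR_def Let_def by (simp add: algebra_simps)
qed

lemma lo_neg: "loR r d lam (- i) = - hiR r d lam i"
proof -
  obtain q j where i: "i = j + q * np r" and j: "0 \<le> j" "j < np r" by (rule i_decomp)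
  have n: "np r = 2 * int r + 2" by (simp add: np_def)
  have D: "Dp d = 2 * int d + 2" by (simp add: Dp_def)
  have pr: "psum lam r + lam (r + 1) = d" by (rule psum_r)
  have hi: "hiR r d lam i = (if j \<le> int r + 1 then ubI r d lam j + q * Dp d else (q + 1) * Dp d - lbI r d lam (np r - j))"
    unfolding i by (rule hiR_at[OF j])
  consider "j = 0" | "1 \<le> j" "j \<le> int r" | "j = int r + 1" | "int r + 2 \<le> j" using j n by linarith
  then show ?thesis
  proof cases
    case 1
    have "- i = 0 + (- q) * np r" using 1 i by simp
    then have "loR r d lam (- i) = lbI r d lam 0 + (- q) * Dp d" using loR_at[of 0 r d lam "-q"] n by simp
    then show ?thesis using hi 1 by (simp add: lbI_def ubI_def)
  next
    case 2
    have "- i = (np r - j) + (- q - 1) * np r" using i by (simp add: algebra_simps)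
    then have "loR r d lam (- i) = (- q - 1 + 1) * Dp d - ubI r d lam (np r - (np r - j))"
      using loR_at[of "np r - j" r d lam "- q - 1"] n 2 j by simp
    then show ?thesis using hi 2 by (simp add: algebra_simps)
  next
    case 3
    have "- i = (int r + 1) + (- q - 1) * np r" using i 3 n by (simp add: algebra_simps)
    then have "loR r d lam (- i) = lbI r d lam (int r + 1) + (- q - 1) * Dp d"
      using loR_at[of "int r + 1" r d lam "- q - 1"] n by simp
    then show ?thesis using hi 3 D by (simp add: lbI_def ubI_def algebra_simps)
  next
    case 4
    have "- i = (np r - j) + (- q - 1) * np r" using i by (simp add: algebra_simps)
    then have "loR r d lam (- i) = lbI r d lam (np r - j) + (- q - 1) * Dp d"
      using loR_at[of "np r - j" r d lam "- q - 1"] n 4 j by simp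
    then show ?thesis using hi 4 by (simp add: algebra_simps)
  qed
qed

lemma hi_neg: "hiR r d lam (- i) = - loR r d lam i"
  using lo_neg[of "- i"] by simp

lemma R_neg: "- z \<in> Rset r d lam (- i) \<longleftrightarrow> z \<in> Rset r d lam i"
  unfolding mem_R lo_neg hi_neg by auto

lemma R_shift: "z + Dp d \<in> Rset r d lam (i + np r) \<longleftrightarrow> z \<in> Rset r d lam i"
  unfolding mem_R lo_shift hi_shift by auto

lemma R_0: "Rset r d lam 0 = {- int (lam 0) .. int (lam 0)}"
  unfolding Rset_eq using loR_at[of 0 r d lam 0] hiR_at[of 0 r d lam 0] np_pos[of r]
  by (simp add: lbI_def ubI_def)

lemma R_last: "Rset r d lam (int r + 1) = {int d + 1 - int (lam (r + 1)) .. int d + 1 + int (lam (r + 1))}"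
  unfolding Rset_eq using loR_at[of "int r + 1" r d lam 0] hiR_at[of "int r + 1" r d lam 0]
  by (simp add: lbI_def ubI_def np_def)

lemma R_mid: "1 \<le> i \<Longrightarrow> i \<le> int r \<Longrightarrow>
  Rset r d lam i = {int (psum lam (nat (i - 1))) + 1 .. int (psum lam (nat i))}"
  unfolding Rset_eq using loR_at[of i r d lam 0] hiR_at[of i r d lam 0]
  by (simp add: lbI_def ubI_def np_def)

lemma base_mono:
  assumes d: "2 \<le> d" and phi: "\<phi> \<in> Wgrp d"
    and hyp: "\<And>k. k \<le> d \<Longrightarrow> (\<forall>i\<le>r. k \<noteq> psum lam i) \<Longrightarrow> \<phi> (aa k) < \<phi> (bb d k)"
    and j: "0 \<le> j" "j \<le> int r + 1"
    and x: "lbI r d lam j \<le> x" "x + 1 \<le> ubI r d lam j"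
  shows "\<phi> x < \<phi> (x + 1)"
proof -
  have pr: "psum lam r + lam (r + 1) = d" by (rule psum_r)
  have D: "Dp d = 2 * int d + 2" by (simp add: Dp_def)
  have p0: "psum lam 0 = lam 0" by (simp add: psum_def)
  have mid: "\<phi> y < \<phi> (y + 1)" if y: "1 \<le> y" "y < int d" "\<forall>i\<le>r. nat y \<noteq> psum lam i" for y
  proof -
    have "\<phi> (aa (nat y)) < \<phi> (bb d (nat y))" using hyp[of "nat y"] y by simp
    moreover have "nat y \<noteq> d" "nat y \<noteq> 0" using y by auto
    ultimately show ?thesis using y by (simp add: aa_def bb_def)
  qed
  have pos: "\<phi> 1 > 0" if "lam 0 \<ge> 1"
  proof -
    have "\<forall>i\<le>r. 0 \<noteq> psum lam i"
    proof (intro allI impI)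
      fix i assume "i \<le> r"
      have "psum lam 0 \<le> psum lam i" by (rule psum_mono) simp
      then show "0 \<noteq> psum lam i" using p0 that by simp
    qed
    then have "\<phi> (aa 0) < \<phi> (bb d 0)" using hyp[of 0] by simp
    then show ?thesis using W_neg[OF phi, of 1] by (simp add: aa_def bb_def)
  qed
  have dlt: "\<phi> (int d) < int d + 1" if "lam (r + 1) \<ge> 1"
  proof -
    have "\<forall>i\<le>r. d \<noteq> psum lam i"
    proof (intro allI impI)
      fix i assume "i \<le> r"
      then have "psum lam i \<le> psum lam r" by (rule psum_mono)
      then show "d \<noteq> psum lam i" using pr that by simp
    qed
    then have "\<phi> (aa d) < \<phi> (bb d d)" using hyp[of d] by simp
    moreover have "\<phi> (int d + 2) = Dp d - \<phi> (int d)" using W_refl[OF phi, of 1 "int d"] by (simp add: Dp_def)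
    ultimately show ?thesis using d D by (simp add: aa_def bb_def)
  qed
  have fixd: "\<phi> (int d + 1) = int d + 1" by (rule W_fix[OF phi])
  have r2: "\<phi> (Dp d - y) = Dp d - \<phi> y" for y using W_refl[OF phi, of 1 y] by simp
  consider "j = 0" | "1 \<le> j" "j \<le> int r" | "j = int r + 1" using j by linarith
  then show ?thesis
  proof cases
    case 1
    have xb: "- int (lam 0) \<le> x" "x + 1 \<le> int (lam 0)" using x 1 by (auto simp: lbI_def ubI_def)
    have pos_case: "\<phi> y < \<phi> (y + 1)" if "1 \<le> y" "y + 1 \<le> int (lam 0)" for y
    proof (rule mid)
      show "1 \<le> y" using that by simp
      show "y < int d" using that pr psum_mono[of 0 r lam] p0 by linarith
      show "\<forall>i\<le>r. nat y \<noteq> psum lam i"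
      proof (intro allI impI)
        fix i assume "i \<le> r"
        then have "psum lam i \<ge> lam 0" using psum_mono[of 0 i lam] p0 by simp
        then show "nat y \<noteq> psum lam i" using that by linarith
      qed
    qed
    consider "1 \<le> x" | "x = 0" | "x = -1" | "x \<le> -2" by linarith
    then show ?thesis
    proof cases
      case 1 then show ?thesis using pos_case xb by simp
    next
      case 2 then show ?thesis using pos xb W_0[OF phi] by simp
    next
      case 3 then show ?thesis using pos xb W_0[OF phi] W_neg[OF phi, of 1] by simp
    next
      case 4
      have "\<phi> (- x - 1) < \<phi> (- x - 1 + 1)" using pos_case[of "- x - 1"] 4 xb by simp
      then show ?thesis using W_neg[OF phi, of "x + 1"] W_neg[OF phi, of x] by simp
    qed
  next
    case 2
    define jn where "jn = nat j"
    have jn: "j = int jn" "1 \<le> jn" "jn \<le> r" using 2 by (auto simp: jn_def)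
    have xb: "int (psum lam (jn - 1)) + 1 \<le> x" "x + 1 \<le> int (psum lam jn)"
      using x jn by (auto simp: lbI_def ubI_def nat_diff_distrib)
    show ?thesis
    proof (rule mid)
      have "psum lam 0 \<le> psum lam (jn - 1)" by (rule psum_mono) simp
      then show "1 \<le> x" using xb by simp
      have "psum lam jn \<le> psum lam r" using jn by (intro psum_mono) simp
      then show "x < int d" using xb pr by linarith
      show "\<forall>i\<le>r. nat x \<noteq> psum lam i"
      proof (intro allI impI)
        fix i assume "i \<le> r"
        show "nat x \<noteq> psum lam i"
        proof (cases "i < jn")
          case True
          then have "psum lam i \<le> psum lam (jn - 1)" by (intro psum_mono) simp
          then show ?thesis using xb by linarith
        next
          case False
          then have "psum lam jn \<le> psum lam i" by (intro psum_mono) simp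
          then show ?thesis using xb by linarith
        qed
      qed
    qed
  next
    case 3
    have xb: "int d + 1 - int (lam (r + 1)) \<le> x" "x + 1 \<le> int d + 1 + int (lam (r + 1))"
      using x 3 by (auto simp: lbI_def ubI_def)
    have low: "\<phi> y < \<phi> (y + 1)" if "int d + 1 - int (lam (r + 1)) \<le> y" "y < int d" for y
    proof (rule mid)
      show "1 \<le> y" using that pr by linarith
      show "y < int d" using that by simp
      show "\<forall>i\<le>r. nat y \<noteq> psum lam i"
      proof (intro allI impI)
        fix i assume "i \<le> r"
        then have "psum lam i \<le> psum lam r" by (intro psum_mono)
        then show "nat y \<noteq> psum lam i" using that pr by linarith
      qed
    qed
    consider "x < int d" | "x = int d" | "x = int d + 1" | "x \<ge> int d + 2" by linarith
    then show ?thesis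
    proof cases
      case 1 then show ?thesis using low xb by simp
    next
      case 2 then show ?thesis using dlt xb fixd by simp
    next
      case 3
      have e: "\<phi> (int d + 2) = Dp d - \<phi> (int d)" using r2[of "int d"] D by simp
      have x1: "x + 1 = int d + 2" using 3 by simp
      have e2: "\<phi> (x + 1) = Dp d - \<phi> (int d)" unfolding x1 by (rule e)
      have "\<phi> x = int d + 1" using 3 fixd by simp
      then show ?thesis using e2 dlt xb D by linarith
    next
      case 4
      have "\<phi> (Dp d - x - 1) < \<phi> (Dp d - x - 1 + 1)" using low[of "Dp d - x - 1"] 4 xb D by simp
      moreover have "\<phi> x = Dp d - \<phi> (Dp d - x)" using r2[of "Dp d - x"] by simp
      moreover have "\<phi> (x + 1) = Dp d - \<phi> (Dp d - x - 1)" using r2[of "Dp d - x - 1"] by simp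
      ultimately show ?thesis by simp
    qed
  qed
qed

lemma cons_mono:
  assumes d: "2 \<le> d" and phi: "\<phi> \<in> Wgrp d"
    and hyp: "\<And>k. k \<le> d \<Longrightarrow> (\<forall>i\<le>r. k \<noteq> psum lam i) \<Longrightarrow> \<phi> (aa k) < \<phi> (bb d k)"
    and x: "x \<in> Rset r d lam i" "x + 1 \<in> Rset r d lam i"
  shows "\<phi> x < \<phi> (x + 1)"
proof -
  obtain q j where i: "i = j + q * np r" and j: "0 \<le> j" "j < np r" by (rule i_decomp)
  have n: "np r = 2 * int r + 2" by (simp add: np_def)
  have lo: "loR r d lam i = (if j \<le> int r + 1 then lbI r d lam j + q * Dp d else (q + 1) * Dp d - ubI r d lam (np r - j))"
    unfolding i by (rule loR_at[OF j])
  have hi: "hiR r d lam i = (if j \<le> int r + 1 then ubI r d lam j + q * Dp d else (q + 1) * Dp d - lbI r d lam (np r - j))"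
    unfolding i by (rule hiR_at[OF j])
  have xb: "loR r d lam i \<le> x" "x + 1 \<le> hiR r d lam i" using x mem_R by blast+
  show ?thesis
  proof (cases "j \<le> int r + 1")
    case True
    define y where "y = x - q * Dp d"
    have "\<phi> y < \<phi> (y + 1)"
      by (rule base_mono[OF d phi hyp j(1) True]) (use xb lo hi True in \<open>auto simp: y_def\<close>)
    moreover have "\<phi> x = \<phi> y + q * Dp d" using W_shift[OF phi, of y q] by (simp add: y_def)
    moreover have "\<phi> (x + 1) = \<phi> (y + 1) + q * Dp d" using W_shift[OF phi, of "y + 1" q] by (simp add: y_def)
    ultimately show ?thesis by simp
  next
    case False
    define y where "y = (q + 1) * Dp d - x - 1"
    have "\<phi> y < \<phi> (y + 1)"
      by (rule base_mono[OF d phi hyp, of "np r - j"]) (use xb lo hi False j n in \<open>auto simp: y_def\<close>)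
    moreover have "\<phi> x = (q + 1) * Dp d - \<phi> (y + 1)" using W_refl[OF phi, of "q + 1" "y + 1"] by (simp add: y_def)
    moreover have "\<phi> (x + 1) = (q + 1) * Dp d - \<phi> y" using W_refl[OF phi, of "q + 1" y] by (simp add: y_def)
    ultimately show ?thesis by simp
  qed
qed

lemma block_mono:
  assumes d: "2 \<le> d" and phi: "\<phi> \<in> Wgrp d"
    and hyp: "\<And>k. k \<le> d \<Longrightarrow> (\<forall>i\<le>r. k \<noteq> psum lam i) \<Longrightarrow> \<phi> (aa k) < \<phi> (bb d k)"
    and x: "x \<in> Rset r d lam i" "x' \<in> Rset r d lam i" "x < x'"
  shows "\<phi> x < \<phi> x'"
proof -
  have gen: "x + 1 + int k \<in> Rset r d lam i \<Longrightarrow> \<phi> x < \<phi> (x + 1 + int k)" for k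
  proof (induction k)
    case 0
    then show ?case using cons_mono[OF d phi hyp x(1)] by simp
  next
    case (Suc k)
    have m: "x + 1 + int k \<in> Rset r d lam i" using Suc.prems x(1) unfolding mem_R by simp
    have "\<phi> x < \<phi> (x + 1 + int k)" using Suc.IH m .
    also have "\<dots> < \<phi> (x + 1 + int k + 1)" using cons_mono[OF d phi hyp m] Suc.prems by simp
    finally show ?case by (simp add: add.assoc)
  qed
  have "x' = x + 1 + int (nat (x' - x - 1))" using x(3) by simp
  then show ?thesis using gen[of "nat (x' - x - 1)"] x(2) by metis
qed

end


definition bl :: "nat \<Rightarrow> nat \<Rightarrow> (nat \<Rightarrow> nat) \<Rightarrow> int \<Rightarrow> int" where
  "bl r d lam z = (THE i. z \<in> Rset r d lam i)"

lemma half_count: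
  fixes A :: "int set"
  assumes fA: "finite A" and c: "c \<in> A" and sym: "\<And>z. z \<in> A \<Longrightarrow> 2 * c - z \<in> A"
  shows "card {z\<in>A. z > c} = card {z\<in>A. z < c}"
    and "card A = 1 + card {z\<in>A. z < c} + card {z\<in>A. z > c}"
proof -
  have im: "{z\<in>A. z > c} = (\<lambda>z. 2 * c - z) ` {z\<in>A. z < c}"
  proof
    show "{z\<in>A. z > c} \<subseteq> (\<lambda>z. 2 * c - z) ` {z\<in>A. z < c}"
    proof
      fix z assume z: "z \<in> {z\<in>A. z > c}"
      show "z \<in> (\<lambda>z. 2 * c - z) ` {z\<in>A. z < c}"
        by (rule image_eqI[where x="2 * c - z"]) (use z sym in auto)
    qed
  qed (use sym in auto)
  have inj: "inj_on (\<lambda>z. 2 * c - z) {z\<in>A. z < c}" by (auto simp: inj_on_def)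
  show e: "card {z\<in>A. z > c} = card {z\<in>A. z < c}" unfolding im using inj by (rule card_image)
  have U: "A = {z\<in>A. z < c} \<union> ({c} \<union> {z\<in>A. z > c})" using c by auto
  have "card A = card {z\<in>A. z < c} + card ({c} \<union> {z\<in>A. z > c})"
    by (subst U, rule card_Un_disjoint) (use fA in auto)
  also have "card ({c} \<union> {z\<in>A. z > c}) = 1 + card {z\<in>A. z > c}"
    by (subst card_Un_disjoint) (use fA in auto)
  finally show "card A = 1 + card {z\<in>A. z < c} + card {z\<in>A. z > c}" by simp
qed

lemma infsum_cells:
  fixes K :: "'b \<Rightarrow> 'c \<Rightarrow> nat" and f :: "'a \<Rightarrow> 'b \<times> 'c"
  assumes fQ: "finite Q" and Q: "Q = {w. f w \<in> S}"
    and K: "\<And>x y. (x, y) \<in> S \<Longrightarrow> K x y = card {w. f w = (x, y)}"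
  shows "infsum (\<lambda>(x, y). c * real (K x y)) S = c * real (card Q)"
proof -
  define T where "T = f ` Q"
  have fT: "finite T" using fQ by (simp add: T_def)
  have TS: "T \<subseteq> S" using Q by (auto simp: T_def)
  have "infsum (\<lambda>(x, y). c * real (K x y)) S = infsum (\<lambda>(x, y). c * real (K x y)) T"
  proof (rule infsum_cong_neutral)
    fix p assume p: "p \<in> S - T"
    obtain x y where xy: "p = (x, y)" by (cases p)
    have "{w. f w = (x, y)} = {}"
    proof (rule ccontr)
      assume "{w. f w = (x, y)} \<noteq> {}"
      then obtain w where w: "f w = (x, y)" by blast
      then have wQ: "w \<in> Q" using Q p xy by auto
      have "f w \<in> f ` Q" using wQ by (rule imageI)
      then have "p \<in> T" unfolding T_def xy w[symmetric] .
      then show False using p by simp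
    qed
    then show "(\<lambda>(x, y). c * real (K x y)) p = 0" using K[of x y] p xy by simp
  qed (use TS in auto)
  also have "\<dots> = (\<Sum>p\<in>T. (\<lambda>(x, y). c * real (K x y)) p)" using fT by (rule infsum_finite)
  also have "\<dots> = (\<Sum>p\<in>T. c * real (card {w\<in>Q. f w = p}))"
  proof (rule sum.cong)
    fix p assume that: "p \<in> T"
    show "(\<lambda>(x, y). c * real (K x y)) p = c * real (card {w\<in>Q. f w = p})"
    proof -
      obtain x y where xy: "p = (x, y)" by (cases p)
      have "{w. f w = (x, y)} = {w\<in>Q. f w = p}" using Q xy that TS by auto
      then show ?thesis using K[of x y] xy that TS by auto
    qed
  qed simp
  also have "\<dots> = c * real (\<Sum>p\<in>T. card {w\<in>Q. f w = p})" by (simp add: sum_distrib_left)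
  also have "(\<Sum>p\<in>T. card {w\<in>Q. f w = p}) = card Q"
  proof -
    have "(\<Sum>p\<in>T. card {w\<in>Q. f w = p}) = (\<Sum>p\<in>T. \<Sum>w\<in>{w\<in>Q. f w = p}. 1)" by simp
    also have "\<dots> = (\<Sum>w\<in>Q. 1)" by (rule sum.group) (use fQ fT in \<open>auto simp: T_def\<close>)
    finally show ?thesis by simp
  qed
  finally show ?thesis .
qed

context fixes r d :: nat and lam :: "nat \<Rightarrow> nat" assumes lam: "lam \<in> Lam r d"
begin

lemma bl_mem: "z \<in> Rset r d lam (bl r d lam z)"
proof -
  obtain i where i: "z \<in> Rset r d lam i" using R_exists[OF lam] by blast
  show ?thesis unfolding bl_def
  proof (rule theI[of _ i])
    show "z \<in> Rset r d lam i" by (rule i)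
    fix i' assume "z \<in> Rset r d lam i'"
    then show "i' = i" using R_unique[OF lam, of z i' i] i by simp
  qed
qed

lemma bl_eq: "z \<in> Rset r d lam i \<longleftrightarrow> bl r d lam z = i"
  using bl_mem R_unique[OF lam] by blast

lemma bl_mono: "z \<le> z' \<Longrightarrow> bl r d lam z \<le> bl r d lam z'"
  using R_order[OF lam, OF bl_mem[of z'] bl_mem[of z]] by fastforce

lemma bl_neg: "bl r d lam (- z) = - bl r d lam z"
  using R_neg[OF lam] bl_mem[of z] bl_eq by blast

lemma bl_shift: "bl r d lam (z + Dp d) = bl r d lam z + np r"
  using R_shift[OF lam] bl_mem[of z] bl_eq by blast

lemma bl_refl: "bl r d lam (Dp d - z) = np r - bl r d lam z"
  using bl_shift[of "- z"] bl_neg[of z] by simp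

lemma bl_0: "bl r d lam 0 = 0"
  using bl_eq[of 0 0] R_0[OF lam] by simp

lemma bl_last: "bl r d lam (int d + 1) = int r + 1"
  using bl_eq[of "int d + 1" "int r + 1"] R_last[OF lam] by simp

lemma lam0_le: "int (lam 0) + int (lam (r + 1)) \<le> int d"
proof -
  have "psum lam 0 \<le> psum lam r" by (rule psum_mono) simp
  then show ?thesis using psum_r[OF lam] by (simp add: psum_def)
qed

lemma bl_range:
  assumes "0 \<le> bl r d lam z" "bl r d lam z \<le> int r + 1"
  shows "- int (lam 0) \<le> z" "z \<le> int d + 1 + int (lam (r + 1))"
proof -
  have m: "z \<in> Rset r d lam (bl r d lam z)" by (rule bl_mem)
  show "- int (lam 0) \<le> z"
  proof (rule ccontr)
    assume "\<not> - int (lam 0) \<le> z"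
    then have "z < - int (lam 0)" by simp
    moreover have "- int (lam 0) \<in> Rset r d lam 0" using R_0[OF lam] by simp
    ultimately have "bl r d lam z \<le> 0" using bl_mono[of z "- int (lam 0)"] bl_eq by simp
    then have "bl r d lam z = 0" using assms by simp
    then show False using m R_0[OF lam] `z < - int (lam 0)` by simp
  qed
  show "z \<le> int d + 1 + int (lam (r + 1))"
  proof (rule ccontr)
    assume "\<not> z \<le> int d + 1 + int (lam (r + 1))"
    then have "z > int d + 1 + int (lam (r + 1))" by simp
    moreover have "int d + 1 + int (lam (r + 1)) \<in> Rset r d lam (int r + 1)" using R_last[OF lam] by simp
    ultimately have "bl r d lam z \<ge> int r + 1" using bl_mono[of "int d + 1 + int (lam (r + 1))" z] bl_eq by simp
    then have "bl r d lam z = int r + 1" using assms by simp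
    then show False using m R_last[OF lam] `z > int d + 1 + int (lam (r + 1))` by simp
  qed
qed

lemma bl_fin: "finite {z. bl r d lam z = i}"
proof -
  have "{z. bl r d lam z = i} = Rset r d lam i" using bl_eq by blast
  then show ?thesis by (simp add: Rset_eq)
qed

end


definition cellf :: "nat \<Rightarrow> nat \<Rightarrow> (nat \<Rightarrow> nat) \<Rightarrow> (nat \<Rightarrow> nat) \<Rightarrow> (int \<Rightarrow> int) \<Rightarrow> int \<Rightarrow> int \<times> int" where
  "cellf r d lam mu g z = (bl r d lam z, bl r d mu (inv g z))"

lemma infsum_fin_support:
  fixes G :: "'a \<Rightarrow> real"
  assumes "finite T" "T \<subseteq> S" "\<And>p. p \<in> S - T \<Longrightarrow> G p = 0"
  shows "infsum G S = sum G T"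
proof -
  have "infsum G S = infsum G T" by (rule infsum_cong_neutral) (use assms in auto)
  then show ?thesis using assms(1) by simp
qed

context fixes r d :: nat and lam mu :: "nat \<Rightarrow> nat" and g :: "int \<Rightarrow> int"
  assumes d: "2 \<le> d" and lam: "lam \<in> Lam r d" and mu: "mu \<in> Lam r d" and gW: "g \<in> Wgrp d"
  and M2: "\<And>i z z'. z \<in> Rset r d lam i \<Longrightarrow> z' \<in> Rset r d lam i \<Longrightarrow> z < z' \<Longrightarrow> inv g z < inv g z'"
  and M1: "\<And>j w w'. w \<in> Rset r d mu j \<Longrightarrow> w' \<in> Rset r d mu j \<Longrightarrow> w < w' \<Longrightarrow> g w < g w'"
begin

lemma hW: "inv g \<in> Wgrp d" using W_inv[OF gW] .

lemma kap_cell: "kap r d lam g mu x y = card {z. cellf r d lam mu g z = (x, y)}"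
proof -
  have "Rset r d lam x \<inter> g ` Rset r d mu y = {z. cellf r d lam mu g z = (x, y)}"
  proof (intro set_eqI iffI)
    fix z assume z: "z \<in> Rset r d lam x \<inter> g ` Rset r d mu y"
    then obtain w where w: "w \<in> Rset r d mu y" "z = g w" by blast
    have "inv g z = w" using w W_app_inv[OF gW] by simp
    then show "z \<in> {z. cellf r d lam mu g z = (x, y)}"
      using z w bl_eq[OF lam] bl_eq[OF mu] by (auto simp: cellf_def)
  next
    fix z assume z: "z \<in> {z. cellf r d lam mu g z = (x, y)}"
    then have a: "z \<in> Rset r d lam x" "inv g z \<in> Rset r d mu y"
      using bl_eq[OF lam] bl_eq[OF mu] by (auto simp: cellf_def)
    have "z = g (inv g z)" using W_inv_app[OF gW] by simp
    then show "z \<in> Rset r d lam x \<inter> g ` Rset r d mu y" using a by blast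
  qed
  then show ?thesis by (simp add: kap_def)
qed

lemma inv_char:
  assumes z: "cellf r d lam mu g z = (i, j)"
  shows "(z - w) * (inv g z - inv g w) < 0 \<longleftrightarrow>
    (bl r d lam w < i \<and> bl r d mu (inv g w) > j) \<or> (bl r d lam w > i \<and> bl r d mu (inv g w) < j)"
proof -
  have zi: "z \<in> Rset r d lam i" and zj: "inv g z \<in> Rset r d mu j"
    using z bl_eq[OF lam] bl_eq[OF mu] by (auto simp: cellf_def)
  have wi: "w \<in> Rset r d lam (bl r d lam w)" and wj: "inv g w \<in> Rset r d mu (bl r d mu (inv g w))"
    using bl_mem[OF lam] bl_mem[OF mu] by auto
  have gg: "\<And>x. g (inv g x) = x" using W_inv_app[OF gW] by simp
  show ?thesis
  proof
    assume "(z - w) * (inv g z - inv g w) < 0"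
    then have "(w < z \<and> inv g z < inv g w) \<or> (z < w \<and> inv g w < inv g z)"
      by (auto simp: mult_less_0_iff)
    then show "(bl r d lam w < i \<and> bl r d mu (inv g w) > j) \<or> (bl r d lam w > i \<and> bl r d mu (inv g w) < j)"
    proof
      assume a: "w < z \<and> inv g z < inv g w"
      have "bl r d lam w \<le> i" using bl_mono[OF lam, of w z] a zi bl_eq[OF lam] by simp
      moreover have "bl r d lam w \<noteq> i"
      proof
        assume "bl r d lam w = i"
        then have "inv g w < inv g z" using M2[OF _ zi] wi a by simp
        then show False using a by simp
      qed
      moreover have "bl r d mu (inv g w) \<ge> j" using bl_mono[OF mu, of "inv g z" "inv g w"] a zj bl_eq[OF mu] by simp
      moreover have "bl r d mu (inv g w) \<noteq> j"
      proof
        assume "bl r d mu (inv g w) = j"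
        then have "g (inv g z) < g (inv g w)" using M1[OF zj] wj a by simp
        then show False using a gg by simp
      qed
      ultimately show ?thesis by auto
    next
      assume a: "z < w \<and> inv g w < inv g z"
      have "bl r d lam w \<ge> i" using bl_mono[OF lam, of z w] a zi bl_eq[OF lam] by simp
      moreover have "bl r d lam w \<noteq> i"
      proof
        assume "bl r d lam w = i"
        then have "inv g z < inv g w" using M2[OF zi] wi a by simp
        then show False using a by simp
      qed
      moreover have "bl r d mu (inv g w) \<le> j" using bl_mono[OF mu, of "inv g w" "inv g z"] a zj bl_eq[OF mu] by simp
      moreover have "bl r d mu (inv g w) \<noteq> j"
      proof
        assume "bl r d mu (inv g w) = j"
        then have "g (inv g w) < g (inv g z)" using M1[OF _ zj] wj a by simp
        then show False using a gg by simp
      qed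
      ultimately show ?thesis by auto
    qed
  next
    assume "(bl r d lam w < i \<and> bl r d mu (inv g w) > j) \<or> (bl r d lam w > i \<and> bl r d mu (inv g w) < j)"
    then show "(z - w) * (inv g z - inv g w) < 0"
    proof
      assume a: "bl r d lam w < i \<and> bl r d mu (inv g w) > j"
      have "w < z" using R_order[OF lam wi zi] a by simp
      moreover have "inv g z < inv g w" using R_order[OF mu zj wj] a by simp
      ultimately show ?thesis by (simp add: mult_less_0_iff)
    next
      assume a: "bl r d lam w > i \<and> bl r d mu (inv g w) < j"
      have "z < w" using R_order[OF lam zi wi] a by simp
      moreover have "inv g w < inv g z" using R_order[OF mu wj zj] a by simp
      ultimately show ?thesis by (simp add: mult_less_0_iff)
    qed
  qed
qed

definition Q1 where "Q1 i j = {w. bl r d lam w < i \<and> bl r d mu (inv g w) > j}"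
definition Q2 where "Q2 i j = {w. bl r d lam w > i \<and> bl r d mu (inv g w) < j}"

lemma cnt_split:
  assumes z: "cellf r d lam mu g z = (i, j)"
  shows "finite (Q1 i j)" "finite (Q2 i j)" "cnt (inv g) z = card (Q1 i j) + card (Q2 i j)"
proof -
  have e: "{w. (z - w) * (inv g z - inv g w) < 0} = Q1 i j \<union> Q2 i j"
    using inv_char[OF z] by (auto simp: Q1_def Q2_def)
  have f: "finite {w. (z - w) * (inv g z - inv g w) < 0}" by (rule cnt_fin[OF hW])
  show f1: "finite (Q1 i j)" using f e by (metis finite_Un)
  show f2: "finite (Q2 i j)" using f e by (metis finite_Un)
  have "Q1 i j \<inter> Q2 i j = {}" by (auto simp: Q1_def Q2_def)
  then show "cnt (inv g) z = card (Q1 i j) + card (Q2 i j)"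
    unfolding cnt_def e using f1 f2 by (simp add: card_Un_disjoint)
qed

lemma inner1:
  assumes z: "cellf r d lam mu g z = (i, j)"
  shows "infsum (\<lambda>(x, y). c * real (kap r d lam g mu x y)) {(x, y). x < i \<and> y > j} = c * real (card (Q1 i j))"
  by (rule infsum_cells[where f="cellf r d lam mu g"]) (use cnt_split[OF z] kap_cell in \<open>auto simp: Q1_def cellf_def\<close>)

lemma inner2:
  assumes z: "cellf r d lam mu g z = (i, j)"
  shows "infsum (\<lambda>(x, y). c * real (kap r d lam g mu x y)) {(x, y). x > i \<and> y < j} = c * real (card (Q2 i j))"
  by (rule infsum_cells[where f="cellf r d lam mu g"]) (use cnt_split[OF z] kap_cell in \<open>auto simp: Q2_def cellf_def\<close>)

lemma cell_neg: "cellf r d lam mu g (- z) = (- fst (cellf r d lam mu g z), - snd (cellf r d lam mu g z))"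
  using bl_neg[OF lam, of z] bl_neg[OF mu, of "inv g z"] W_neg[OF hW, of z] by (simp add: cellf_def)

lemma cell_refl: "cellf r d lam mu g (Dp d - z) = (np r - fst (cellf r d lam mu g z), np r - snd (cellf r d lam mu g z))"
  using bl_refl[OF lam, of z] bl_refl[OF mu, of "inv g z"] W_refl[OF hW, of 1 z] by (simp add: cellf_def)

lemma cell_0: "cellf r d lam mu g 0 = (0, 0)"
  using bl_0[OF lam] bl_0[OF mu] W_0[OF hW] by (simp add: cellf_def)

lemma cell_last: "cellf r d lam mu g (int d + 1) = (int r + 1, int r + 1)"
  using bl_last[OF lam] bl_last[OF mu] W_fix[OF hW] by (simp add: cellf_def)

lemma Iplus_iff: "(i, j) \<in> Iplus r \<longleftrightarrow> (i = 0 \<and> j \<ge> 0) \<or> (1 \<le> i \<and> i \<le> int r) \<or> (i = int r + 1 \<and> j \<le> int r + 1)"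
  by (simp add: Iplus_def)

lemma special_cases: "(i, i) \<in> Iplus r \<Longrightarrow> (int r + 1) dvd i \<Longrightarrow> i = 0 \<or> i = int r + 1"
proof -
  assume a: "(i, i) \<in> Iplus r" "(int r + 1) dvd i"
  show ?thesis
  proof (rule ccontr)
    assume "\<not> (i = 0 \<or> i = int r + 1)"
    then have "1 \<le> i" "i \<le> int r" using a(1) Iplus_iff by auto
    then have "int r + 1 \<le> i" using zdvd_imp_le[OF a(2)] by simp
    then show False using \<open>i \<le> int r\<close> by simp
  qed
qed

lemma cell_fin: "finite {z. cellf r d lam mu g z = p}"
proof -
  have "{z. cellf r d lam mu g z = p} \<subseteq> {z. bl r d lam z = fst p}" by (auto simp: cellf_def)
  then show ?thesis using bl_fin[OF lam] finite_subset by blast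
qed

lemma G_val:
  assumes z: "cellf r d lam mu g z = (i, j)"
  shows "infsum (\<lambda>(x, y). aprime r (kap r d lam g mu) i j * real (kap r d lam g mu x y)) {(x, y). x < i \<and> y > j}
      + infsum (\<lambda>(x, y). aprime r (kap r d lam g mu) i j * real (kap r d lam g mu x y)) {(x, y). x > i \<and> y < j}
     = aprime r (kap r d lam g mu) i j * real (cnt (inv g) z)"
proof -
  let ?c = "aprime r (kap r d lam g mu) i j"
  have "?c * real (cnt (inv g) z) = ?c * real (card (Q1 i j)) + ?c * real (card (Q2 i j))"
    using cnt_split(3)[OF z] by (simp add: algebra_simps)
  then show ?thesis using inner1[OF z, of ?c] inner2[OF z, of ?c] by simp
qed

lemma G_zero:
  assumes p: "(i, j) \<in> Iplus r" and e: "\<And>z. cellf r d lam mu g z \<noteq> (i, j)"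
  shows "infsum (\<lambda>(x, y). aprime r (kap r d lam g mu) i j * real (kap r d lam g mu x y)) {(x, y). x < i \<and> y > j}
      + infsum (\<lambda>(x, y). aprime r (kap r d lam g mu) i j * real (kap r d lam g mu x y)) {(x, y). x > i \<and> y < j} = 0"
proof -
  have k: "kap r d lam g mu i j = 0" using kap_cell[of i j] e by simp
  have "\<not> (i = j \<and> (int r + 1) dvd i)"
  proof
    assume s: "i = j \<and> (int r + 1) dvd i"
    then have "(i, i) \<in> Iplus r" "(int r + 1) dvd i" using p by auto
    then have "i = 0 \<or> i = int r + 1" by (rule special_cases)
    then show False using s e cell_0 cell_last by auto
  qed
  then have "aprime r (kap r d lam g mu) i j = real (kap r d lam g mu i j)" unfolding aprime_def by (rule if_not_P)
  then have "aprime r (kap r d lam g mu) i j = 0" using k by simp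
  moreover have "\<And>S. infsum (\<lambda>(x::int, y::int). (0::real)) S = 0" by (rule infsum_0) auto
  ultimately show ?thesis by simp
qed

definition Pp where "Pp = {z. cellf r d lam mu g z \<in> Iplus r \<and> \<not> (cellf r d lam mu g z = (0, 0) \<and> z \<le> 0)
   \<and> \<not> (cellf r d lam mu g z = (int r + 1, int r + 1) \<and> z \<ge> int d + 1)}"

definition phi :: "int \<Rightarrow> int" where
  "phi z = (if z \<le> 0 then - z else if z \<ge> int d + 1 then Dp d - z else z)"

lemma Pp_range: "z \<in> Pp \<Longrightarrow> - int (lam 0) \<le> z \<and> z \<le> int d + 1 + int (lam (r + 1))"
proof -
  assume z: "z \<in> Pp"
  obtain i j where c: "cellf r d lam mu g z = (i, j)" by (cases "cellf r d lam mu g z")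
  have "(i, j) \<in> Iplus r" using z c by (simp add: Pp_def)
  then have "0 \<le> i" "i \<le> int r + 1" using Iplus_iff by auto
  moreover have "i = bl r d lam z" using c by (simp add: cellf_def)
  ultimately show ?thesis using bl_range[OF lam] by auto
qed

lemma Pp_low:
  assumes z: "z \<in> Pp" "z \<le> 0"
  shows "bl r d lam z = 0" "snd (cellf r d lam mu g z) > 0" "- z \<le> int (lam 0)" "z \<noteq> 0"
proof -
  obtain i j where c: "cellf r d lam mu g z = (i, j)" by (cases "cellf r d lam mu g z")
  have ij: "(i, j) \<in> Iplus r" using z c by (simp add: Pp_def)
  have bi: "i = bl r d lam z" using c by (simp add: cellf_def)
  have "bl r d lam z \<le> 0" using bl_mono[OF lam z(2)] bl_0[OF lam] by simp
  then show b0: "bl r d lam z = 0" using ij bi Iplus_iff by auto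
  then have "j \<ge> 0" using ij bi Iplus_iff by auto
  moreover have "j \<noteq> 0" using z c bi b0 by (auto simp: Pp_def)
  ultimately show "snd (cellf r d lam mu g z) > 0" using c by simp
  show "- z \<le> int (lam 0)" using Pp_range[OF z(1)] by simp
  show "z \<noteq> 0" using z cell_0 by (auto simp: Pp_def)
qed

lemma Pp_high:
  assumes z: "z \<in> Pp" "z \<ge> int d + 1"
  shows "bl r d lam z = int r + 1" "snd (cellf r d lam mu g z) < int r + 1"
    "z \<le> int d + 1 + int (lam (r + 1))" "z \<noteq> int d + 1"
proof -
  obtain i j where c: "cellf r d lam mu g z = (i, j)" by (cases "cellf r d lam mu g z")
  have ij: "(i, j) \<in> Iplus r" using z c by (simp add: Pp_def)
  have bi: "i = bl r d lam z" using c by (simp add: cellf_def)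
  have "bl r d lam z \<ge> int r + 1" using bl_mono[OF lam z(2)] bl_last[OF lam] by simp
  then show b0: "bl r d lam z = int r + 1" using ij bi Iplus_iff by auto
  then have "j \<le> int r + 1" using ij bi Iplus_iff by auto
  moreover have "j \<noteq> int r + 1" using z c bi b0 by (auto simp: Pp_def)
  ultimately show "snd (cellf r d lam mu g z) < int r + 1" using c by simp
  show "z \<le> int d + 1 + int (lam (r + 1))" using Pp_range[OF z(1)] by simp
  show "z \<noteq> int d + 1" using z cell_last by (auto simp: Pp_def)
qed

lemma Pp_neg_out: "z \<in> Pp \<Longrightarrow> z \<le> 0 \<Longrightarrow> - z \<notin> Pp"
proof
  assume z: "z \<in> Pp" "z \<le> 0" and nz: "- z \<in> Pp"
  have "snd (cellf r d lam mu g (- z)) < 0" using Pp_low[OF z] cell_neg[of z] by simp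
  moreover have "fst (cellf r d lam mu g (- z)) = 0" using Pp_low[OF z] cell_neg[of z] by (simp add: cellf_def)
  ultimately have "cellf r d lam mu g (- z) \<notin> Iplus r"
    using Iplus_iff by (cases "cellf r d lam mu g (- z)") auto
  then show False using nz by (simp add: Pp_def)
qed

lemma Pp_refl_out: "z \<in> Pp \<Longrightarrow> z \<ge> int d + 1 \<Longrightarrow> Dp d - z \<notin> Pp"
proof
  assume z: "z \<in> Pp" "z \<ge> int d + 1" and nz: "Dp d - z \<in> Pp"
  have n: "np r = 2 * int r + 2" by (simp add: np_def)
  have "snd (cellf r d lam mu g (Dp d - z)) > int r + 1" using Pp_high[OF z] cell_refl[of z] n by simp
  moreover have "fst (cellf r d lam mu g (Dp d - z)) = int r + 1" using Pp_high[OF z] cell_refl[of z] n by (simp add: cellf_def)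
  ultimately have "cellf r d lam mu g (Dp d - z) \<notin> Iplus r"
    using Iplus_iff by (cases "cellf r d lam mu g (Dp d - z)") auto
  then show False using nz by (simp add: Pp_def)
qed

lemma phi_bij: "bij_betw phi Pp {1..int d}"
proof -
  have D: "Dp d = 2 * int d + 2" by (simp add: Dp_def)
  have ll: "int (lam 0) + int (lam (r + 1)) \<le> int d" by (rule lam0_le[OF lam])
  have into: "phi z \<in> {1..int d}" if z: "z \<in> Pp" for z
  proof (cases "z \<le> 0")
    case True then show ?thesis using Pp_low[OF z True] ll by (auto simp: phi_def)
  next
    case False
    show ?thesis
    proof (cases "z \<ge> int d + 1")
      case True then show ?thesis using Pp_high[OF z True] ll False D by (auto simp: phi_def)
    next
      case False2: False
      then show ?thesis using False by (auto simp: phi_def)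
    qed
  qed
  have inj: "inj_on phi Pp"
  proof (rule inj_onI)
    fix z z' assume z: "z \<in> Pp" and z': "z' \<in> Pp" and e: "phi z = phi z'"
    have case_ok: "a = b" if a: "a \<in> Pp" "b \<in> Pp" "phi a = phi b" "a \<le> 0 \<or> a \<ge> int d + 1" for a b
    proof -
      consider "a \<le> 0" "b \<le> 0" | "a \<le> 0" "b > 0" "b < int d + 1" | "a \<le> 0" "b \<ge> int d + 1"
        | "a \<ge> int d + 1" "b \<le> 0" | "a \<ge> int d + 1" "b > 0" "b < int d + 1" | "a \<ge> int d + 1" "b \<ge> int d + 1"
        using a(4) by linarith
      then have "a = b"
      proof cases
        case 1 then show ?thesis using a by (simp add: phi_def)
      next
        case 2
        then have "b = - a" using a by (simp add: phi_def)
        then show ?thesis using Pp_neg_out[OF a(1) 2(1)] a(2) by simp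
      next
        case 3
        have "- a = Dp d - b" using a 3 D by (simp add: phi_def)
        then show ?thesis using Pp_low[OF a(1) 3(1)] Pp_high[OF a(2) 3(2)] ll D by linarith
      next
        case 4
        have "- b = Dp d - a" using a 4 D by (simp add: phi_def)
        then show ?thesis using Pp_low[OF a(2) 4(2)] Pp_high[OF a(1) 4(1)] ll D by linarith
      next
        case 5
        then have "b = Dp d - a" using a D by (simp add: phi_def)
        then show ?thesis using Pp_refl_out[OF a(1) 5(1)] a(2) by simp
      next
        case 6 then show ?thesis using a D by (simp add: phi_def)
      qed
      then show "a = b" .
    qed
    consider "z \<le> 0 \<or> z \<ge> int d + 1" | "z' \<le> 0 \<or> z' \<ge> int d + 1" | "0 < z \<and> z < int d + 1 \<and> 0 < z' \<and> z' < int d + 1"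
      by linarith
    then show "z = z'"
    proof cases
      case 1 then show ?thesis using case_ok[OF z z' e] by simp
    next
      case 2 then show ?thesis using case_ok[OF z' z e[symmetric]] by simp
    next
      case 3 then show ?thesis using e by (simp add: phi_def)
    qed
  qed
  have onto: "{1..int d} \<subseteq> phi ` Pp"
  proof
    fix y assume y: "y \<in> {1..int d}"
    have n: "np r = 2 * int r + 2" by (simp add: np_def)
    obtain i j where c: "cellf r d lam mu g y = (i, j)" by (cases "cellf r d lam mu g y")
    have bi: "i = bl r d lam y" using c by (simp add: cellf_def)
    have i0: "0 \<le> i" using bl_mono[OF lam, of 0 y] bl_0[OF lam] y bi by simp
    have i1: "i \<le> int r + 1" using bl_mono[OF lam, of y "int d + 1"] bl_last[OF lam] y bi by simp
    consider "1 \<le> i \<and> i \<le> int r" | "i = 0" "j \<ge> 0" | "i = 0" "j < 0" | "i = int r + 1" "j \<le> int r + 1"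
      | "i = int r + 1" "j > int r + 1" using i0 i1 by linarith
    then show "y \<in> phi ` Pp"
    proof cases
      case 1
      have "y \<in> Pp" using c 1 y by (auto simp: Pp_def Iplus_iff)
      moreover have "phi y = y" using y by (simp add: phi_def)
      ultimately show ?thesis by (metis imageI)
    next
      case 2
      have "y \<in> Pp" using c 2 y by (auto simp: Pp_def Iplus_iff)
      moreover have "phi y = y" using y by (simp add: phi_def)
      ultimately show ?thesis by (metis imageI)
    next
      case 3
      have c2: "cellf r d lam mu g (- y) = (0, - j)" using cell_neg[of y] c 3 by simp
      have "- y \<in> Pp" using c2 3 y by (auto simp: Pp_def Iplus_iff)
      moreover have "phi (- y) = y" using y by (simp add: phi_def)
      ultimately show ?thesis by (metis imageI)
    next
      case 4
      have "y \<in> Pp" using c 4 y by (auto simp: Pp_def Iplus_iff)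
      moreover have "phi y = y" using y by (simp add: phi_def)
      ultimately show ?thesis by (metis imageI)
    next
      case 5
      have c2: "cellf r d lam mu g (Dp d - y) = (int r + 1, np r - j)" using cell_refl[of y] c 5 n by simp
      have "Dp d - y \<in> Pp" using c2 5 y n by (auto simp: Pp_def Iplus_iff)
      moreover have "phi (Dp d - y) = y" using y by (auto simp: phi_def Dp_def)
      ultimately show ?thesis by (metis imageI)
    qed
  qed
  show ?thesis unfolding bij_betw_def using inj into onto by blast
qed

lemma card_Pp_cell:
  assumes p: "(i, j) \<in> Iplus r" and z0: "cellf r d lam mu g z0 = (i, j)"
  shows "real (card {z\<in>Pp. cellf r d lam mu g z = (i, j)}) = aprime r (kap r d lam g mu) i j"
proof -
  define C where "C = {z. cellf r d lam mu g z = (i, j)}"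
  have K: "kap r d lam g mu i j = card C" unfolding C_def by (rule kap_cell)
  have fC: "finite C" unfolding C_def by (rule cell_fin)
  show ?thesis
  proof (cases "i = j \<and> (int r + 1) dvd i")
    case True
    then have ii: "(i, i) \<in> Iplus r" "(int r + 1) dvd i" using p by auto
    have "aprime r (kap r d lam g mu) i j = (real (kap r d lam g mu i j) - 1) / 2"
      unfolding aprime_def by (rule if_P[OF True])
    then have ap: "aprime r (kap r d lam g mu) i j = (real (card C) - 1) / 2" using K by simp
    have "i = 0 \<or> i = int r + 1" using special_cases[OF ii] .
    then show ?thesis
    proof
      assume i0: "i = 0"
      then have j0: "j = 0" using True by simp
      have e: "{z\<in>Pp. cellf r d lam mu g z = (i, j)} = {z\<in>C. z > 0}"
        using p i0 j0 unfolding C_def Pp_def by auto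
      have c0: "0 \<in> C" using cell_0 i0 j0 by (simp add: C_def)
      have sym: "2 * 0 - z \<in> C" if "z \<in> C" for z
        using that cell_neg[of z] i0 j0 by (simp add: C_def)
      have h: "card {z\<in>C. z > 0} = card {z\<in>C. z < 0}" "card C = 1 + card {z\<in>C. z < 0} + card {z\<in>C. z > 0}"
        using half_count[OF fC c0 sym] by auto
      show ?thesis unfolding e ap using h by simp
    next
      assume i0: "i = int r + 1"
      then have j0: "j = int r + 1" using True by simp
      have n: "np r = 2 * int r + 2" by (simp add: np_def)
      have e: "{z\<in>Pp. cellf r d lam mu g z = (i, j)} = {z\<in>C. z < int d + 1}"
        using p i0 j0 unfolding C_def Pp_def by auto
      have c0: "int d + 1 \<in> C" using cell_last i0 j0 by (simp add: C_def)
      have sym: "2 * (int d + 1) - z \<in> C" if "z \<in> C" for z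
      proof -
        have "2 * (int d + 1) - z = Dp d - z" by (simp add: Dp_def)
        then show ?thesis using that cell_refl[of z] i0 j0 n by (simp add: C_def)
      qed
      have h: "card {z\<in>C. z > int d + 1} = card {z\<in>C. z < int d + 1}"
        "card C = 1 + card {z\<in>C. z < int d + 1} + card {z\<in>C. z > int d + 1}"
        using half_count[OF fC c0 sym] by auto
      show ?thesis unfolding e ap using h by simp
    qed
  next
    case False
    have "aprime r (kap r d lam g mu) i j = real (kap r d lam g mu i j)"
      unfolding aprime_def by (rule if_not_P[OF False])
    then have ap: "aprime r (kap r d lam g mu) i j = real (card C)" using K by simp
    have ne1: "(i, j) \<noteq> (0, 0)" using False by auto
    have ne2: "(i, j) \<noteq> (int r + 1, int r + 1)" using False by auto
    have e: "{z\<in>Pp. cellf r d lam mu g z = (i, j)} = C"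
      using p ne1 ne2 unfolding C_def Pp_def by auto
    show ?thesis unfolding e ap ..
  qed
qed

lemma main_count:
  "infsum (\<lambda>(i, j).
        infsum (\<lambda>(x, y). aprime r (kap r d lam g mu) i j * real (kap r d lam g mu x y))
               {(x, y). x < i \<and> y > j}
      + infsum (\<lambda>(x, y). aprime r (kap r d lam g mu) i j * real (kap r d lam g mu x y))
               {(x, y). x > i \<and> y < j})
      (Iplus r) = real (Ssum d (inv g))"
  (is "infsum ?G (Iplus r) = _")
proof -
  have ll: "int (lam 0) + int (lam (r + 1)) \<le> int d" by (rule lam0_le[OF lam])
  define Sup where "Sup = {p \<in> Iplus r. \<exists>z. cellf r d lam mu g z = p}"
  have Sup_sub: "Sup \<subseteq> cellf r d lam mu g ` {- int d .. 2 * int d + 1}"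
  proof
    fix p assume pS: "p \<in> Sup"
    then obtain z where z: "cellf r d lam mu g z = p" and pI: "p \<in> Iplus r" by (auto simp: Sup_def)
    obtain i j where ij: "p = (i, j)" by (cases p)
    have "0 \<le> i" "i \<le> int r + 1" using pI ij Iplus_iff by auto
    moreover have "i = bl r d lam z" using z ij by (simp add: cellf_def)
    ultimately have "- int (lam 0) \<le> z" "z \<le> int d + 1 + int (lam (r + 1))" using bl_range[OF lam] by auto
    then have "z \<in> {- int d .. 2 * int d + 1}" using ll by auto
    then show "p \<in> cellf r d lam mu g ` {- int d .. 2 * int d + 1}" using z by blast
  qed
  have fSup: "finite Sup" using Sup_sub finite_subset by blast
  have S2: "infsum ?G (Iplus r) = sum ?G Sup"
  proof (rule infsum_fin_support[OF fSup])
    show "Sup \<subseteq> Iplus r" by (auto simp: Sup_def)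
    fix p assume p: "p \<in> Iplus r - Sup"
    obtain i j where ij: "p = (i, j)" by (cases p)
    have "\<And>z. cellf r d lam mu g z \<noteq> (i, j)" using p ij by (auto simp: Sup_def)
    then show "?G p = 0" using G_zero[of i j] p ij by simp
  qed
  have PpS: "Pp \<subseteq> {- int d .. 2 * int d + 1}" using Pp_range ll by fastforce
  have fPp: "finite Pp" using PpS finite_subset by blast
  have imS: "cellf r d lam mu g ` Pp \<subseteq> Sup" by (auto simp: Sup_def Pp_def)
  have S3: "sum ?G Sup = (\<Sum>p\<in>Sup. \<Sum>z\<in>{z\<in>Pp. cellf r d lam mu g z = p}. real (cnt (inv g) z))"
  proof (rule sum.cong)
    fix p assume pS: "p \<in> Sup"
    then obtain z0 where z0: "cellf r d lam mu g z0 = p" and pI: "p \<in> Iplus r" by (auto simp: Sup_def)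
    obtain i j where ij: "p = (i, j)" by (cases p)
    have "(\<Sum>z\<in>{z\<in>Pp. cellf r d lam mu g z = p}. real (cnt (inv g) z))
        = (\<Sum>z\<in>{z\<in>Pp. cellf r d lam mu g z = p}. real (cnt (inv g) z0))"
    proof (rule sum.cong)
      fix z assume "z \<in> {z\<in>Pp. cellf r d lam mu g z = p}"
      then have "cellf r d lam mu g z = (i, j)" using ij by simp
      then show "real (cnt (inv g) z) = real (cnt (inv g) z0)"
        using cnt_split(3)[of z i j] cnt_split(3)[of z0 i j] z0 ij by simp
    qed simp
    also have "\<dots> = real (card {z\<in>Pp. cellf r d lam mu g z = p}) * real (cnt (inv g) z0)" by simp
    also have "\<dots> = aprime r (kap r d lam g mu) i j * real (cnt (inv g) z0)"
      using card_Pp_cell[of i j z0] pI z0 ij by simp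
    also have "\<dots> = ?G p" using G_val[of z0 i j] z0 ij by simp
    finally show "?G p = (\<Sum>z\<in>{z\<in>Pp. cellf r d lam mu g z = p}. real (cnt (inv g) z))" by simp
  qed simp
  have S4: "(\<Sum>p\<in>Sup. \<Sum>z\<in>{z\<in>Pp. cellf r d lam mu g z = p}. real (cnt (inv g) z)) = (\<Sum>z\<in>Pp. real (cnt (inv g) z))"
    by (rule sum.group[OF fPp fSup imS])
  have S5: "(\<Sum>z\<in>Pp. real (cnt (inv g) z)) = (\<Sum>y\<in>{1..int d}. real (cnt (inv g) y))"
  proof -
    have "(\<Sum>z\<in>Pp. real (cnt (inv g) (phi z))) = (\<Sum>y\<in>{1..int d}. real (cnt (inv g) y))"
      by (rule sum.reindex_bij_betw[OF phi_bij])
    moreover have "cnt (inv g) (phi z) = cnt (inv g) z" for z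
      using cnt_neg[OF hW, of z] cnt_refl[OF hW, of z] by (simp add: phi_def)
    ultimately show ?thesis by simp
  qed
  have S6: "(\<Sum>y\<in>{1..int d}. real (cnt (inv g) y)) = real (Ssum d (inv g))"
    by (simp add: Ssum_def)
  show ?thesis using S2 S3 S4 S5 S6 by simp
qed

end


lemma Dset_hyp:
  assumes d: "2 \<le> d" and g0: "g0 \<in> Dset r d lam'" and k: "k \<le> d" and nk: "\<forall>i\<le>r. k \<noteq> psum lam' i"
  shows "inv g0 (aa k) < inv g0 (bb d k)"
proof -
  have g0W: "g0 \<in> Wgrp d" using g0 by (simp add: Dset_def)
  let ?s = "sref d k"
  have sW: "?s \<in> Wgrp d" using sref_W[OF d k] .
  have sw: "wordprod d [k] = ?s" by (simp add: wordprod_Cons wordprod_Nil)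
  have "set [k] \<subseteq> {0..d} - {psum lam' i | i. i \<le> r}" using k nk by auto
  then have sP: "?s \<in> Wpar r d lam'"
    unfolding Wpar_def sw[symmetric] by blast
  have add: "clen d (?s \<circ> g0) = clen d ?s + clen d g0" using g0 sP by (simp add: Dset_def)
  have "id (aa k) < id (bb d k)" by (auto simp: aa_def bb_def)
  then have "Ssum d (id \<circ> ?s) = Ssum d id + 2" using A1(1)[OF d W_id k] by simp
  then have "Ssum d ?s = 2" using Ssum_id by simp
  then have c1: "clen d ?s = 1" using A6[OF d sW] by simp
  have ss: "?s \<circ> ?s = id" using sref_invol[OF d k] by (auto simp: fun_eq_iff)
  have invs: "inv ?s = ?s" using inv_unique_comp[OF ss ss] .
  have "inv (?s \<circ> g0) = inv g0 \<circ> inv ?s" by (rule o_inv_distrib[OF W_bij[OF sW] W_bij[OF g0W]])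
  then have e: "inv (?s \<circ> g0) = inv g0 \<circ> ?s" using invs by simp
  have sgW: "?s \<circ> g0 \<in> Wgrp d" using W_comp[OF sW g0W] .
  have "clen d (inv g0 \<circ> ?s) = clen d (?s \<circ> g0)" using B1[OF d sgW] e by simp
  also have "\<dots> = 1 + clen d (inv g0)" using add c1 B1[OF d g0W] by simp
  finally have cl: "clen d (inv g0 \<circ> ?s) = 1 + clen d (inv g0)" .
  have hW: "inv g0 \<in> Wgrp d" using W_inv[OF g0W] .
  have hsW: "inv g0 \<circ> ?s \<in> Wgrp d" using W_comp[OF hW sW] .
  have S: "Ssum d (inv g0 \<circ> ?s) = Ssum d (inv g0) + 2" using A6[OF d hsW] A6[OF d hW] cl by simp
  have ne: "inv g0 (aa k) \<noteq> inv g0 (bb d k)" using W_inj[OF hW] aa_ne_bb[OF d k] by simp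
  show ?thesis
  proof (rule ccontr)
    assume "\<not> inv g0 (aa k) < inv g0 (bb d k)"
    then have "inv g0 (aa k) > inv g0 (bb d k)" using ne by simp
    then have "Ssum d (inv g0 \<circ> ?s) + 2 = Ssum d (inv g0)" using A1(2)[OF d hW k] by simp
    then show False using S by simp
  qed
qed

theorem proposition5p2p1:
  fixes r d :: nat and lam mu :: "nat \<Rightarrow> nat" and g :: "int \<Rightarrow> int"
  assumes "d \<ge> 2"
    and "lam \<in> Lam r d" and "mu \<in> Lam r d"
    and "g \<in> Dset2 r d lam mu"
  shows "real (clen d g) = 1 / 2 *
    infsum (\<lambda>(i, j).
        infsum (\<lambda>(x, y). aprime r (kap r d lam g mu) i j * real (kap r d lam g mu x y))
               {(x, y). x < i \<and> y > j}
      + infsum (\<lambda>(x, y). aprime r (kap r d lam g mu) i j * real (kap r d lam g mu x y))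
               {(x, y). x > i \<and> y < j})
      (Iplus r)"
proof -
  have d: "2 \<le> d" using assms(1) .
  have lam: "lam \<in> Lam r d" and mu: "mu \<in> Lam r d" using assms by auto
  have gl: "g \<in> Dset r d lam" using assms(4) by (simp add: Dset2_def)
  obtain g0 where g0: "g0 \<in> Dset r d mu" "g = inv g0" using assms(4) by (auto simp: Dset2_def)
  have gW: "g \<in> Wgrp d" using gl by (simp add: Dset_def)
  have hW: "inv g \<in> Wgrp d" using W_inv[OF gW] .
  have hyp1: "\<And>k. k \<le> d \<Longrightarrow> (\<forall>i\<le>r. k \<noteq> psum lam i) \<Longrightarrow> inv g (aa k) < inv g (bb d k)"
    using Dset_hyp[OF d gl] by blast
  have hyp2: "\<And>k. k \<le> d \<Longrightarrow> (\<forall>i\<le>r. k \<noteq> psum mu i) \<Longrightarrow> g (aa k) < g (bb d k)"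
    using Dset_hyp[OF d g0(1)] g0(2) by blast
  have M2: "\<And>i z z'. z \<in> Rset r d lam i \<Longrightarrow> z' \<in> Rset r d lam i \<Longrightarrow> z < z' \<Longrightarrow> inv g z < inv g z'"
    using block_mono[OF lam d hW hyp1] by blast
  have M1: "\<And>j w w'. w \<in> Rset r d mu j \<Longrightarrow> w' \<in> Rset r d mu j \<Longrightarrow> w < w' \<Longrightarrow> g w < g w'"
    using block_mono[OF mu d gW hyp2] by blast
  have mc: "infsum (\<lambda>(i, j).
        infsum (\<lambda>(x, y). aprime r (kap r d lam g mu) i j * real (kap r d lam g mu x y))
               {(x, y). x < i \<and> y > j}
      + infsum (\<lambda>(x, y). aprime r (kap r d lam g mu) i j * real (kap r d lam g mu x y))
               {(x, y). x > i \<and> y < j})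
      (Iplus r) = real (Ssum d (inv g))"
    by (rule main_count[OF d lam mu gW M2 M1])
  have "Ssum d (inv g) = 2 * clen d g" using A6[OF d hW] B1[OF d gW] by simp
  then show ?thesis using mc by simp
qed


end
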